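(* If $\theta\in l_{2}$ and $\tau\in l_{2}$ (with $\tau_i\ge 0$), then $Q_{\mathrm{G}_{\tau}}(\cdot|X=x)$ and $Q_{\theta}$ are mutually absolutely continuous for $P_{\theta}$-almost every $x$, and the Kullback--Leibler risk of $Q_{\mathrm{G}_{\tau}}$ is \[ R(\theta,Q_{\mathrm{G}_{\tau}}) = \sum_{i=1}^{\infty}\left\{\frac{1}{2}\log\left(\frac{1+\tau^{2}_{i}/v^{2}_{\varepsilon,\tilde{\varepsilon}}}{1+\tau^{2}_{i}/v^{2}_{\varepsilon}}\right) +\frac{1}{2}\frac{v^{2}_{\varepsilon,\tilde{\varepsilon}}+\theta^{2}_{i}}{v^{2}_{\varepsilon,\tilde{\varepsilon}}+\tau^{2}_{i}} -\frac{1}{2}\frac{v^{2}_{\varepsilon}+\theta^{2}_{i}}{v^{2}_{\varepsilon}+\tau^{2}_{i}} \right\}. \]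
   Context: Fix $\varepsilon>0,\tilde\varepsilon>0$. For $\theta\in l_2$, $P_{\theta}=\bigotimes_{i\ge1}\mathcal{N}(\theta_{i},\varepsilon^{2})$ (law of the observation $X$) and $Q_{\theta}=\bigotimes_{i\ge1}\mathcal{N}(\theta_{i},\tilde{\varepsilon}^{2})$ (law of the future observation $Y$) on $\mathbb{R}^\infty$ with the product Borel $\sigma$-field. For a predictive distribution $x\mapsto\widehat Q(\cdot;x)$, the risk is $R(\theta,\widehat Q)=\int l(\theta,\widehat Q(\cdot;x))\,\mathrm dP_\theta(x)$ where $l(\theta,Q)=\int\log\frac{\mathrm dQ_\theta}{\mathrm dQ}\,\mathrm dQ_\theta$ if $Q_\theta\ll Q$ and $\infty$ otherwise. For $\tau$ with $\tau_i\ge0$, $\mathrm{G}_\tau=\bigotimes_i\mathcal N(0,\tau_i^2)$ and the Bayesian predictive distribution based on it is $Q_{\mathrm{G}_{\tau}}(\cdot|X=x)=\bigotimes_{i}\mathcal{N}\Big(\frac{1/\varepsilon^{2}}{1/\varepsilon^{2}+1/\tau^{2}_{i}}x_{i},\ \frac{1}{1/\varepsilon^{2}+1/\tau^{2}_{i}}+\tilde{\varepsilon}^{2}\Big)$ (coordinates with $\tau_i=0$ give $\mathcal N(0,\tilde\varepsilon^2)$). Also $v^{2}_{\varepsilon,\tilde{\varepsilon}}=1/(1/\varepsilon^{2}+1/\tilde{\varepsilon}^{2})$ and $v^{2}_{\varepsilon}=\varepsilon^{2}$. *)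

theory Defs
  imports "HOL-Probability.Probability"
begin

definition gauss :: "real \<Rightarrow> real \<Rightarrow> real measure" where
  "gauss m s2 = density lborel (normal_density m (sqrt s2))"

definition gauss_prod :: "(nat \<Rightarrow> real) \<Rightarrow> real \<Rightarrow> (nat \<Rightarrow> real) measure" where
  "gauss_prod \<theta> s = PiM UNIV (\<lambda>i. gauss (\<theta> i) (s\<^sup>2))"

definition in_l2 :: "(nat \<Rightarrow> real) \<Rightarrow> bool" where
  "in_l2 \<theta> \<longleftrightarrow> summable (\<lambda>i. (\<theta> i)\<^sup>2)"

text \<open>Loss l(theta,Q) = int log (dQ_theta/dQ) dQ_theta if Q_theta << Q (and the
  integral is finite), infinity otherwise.  Here Qt is Q_theta.\<close>
definition KL_loss :: "'a measure \<Rightarrow> 'a measure \<Rightarrow> ennreal" where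
  "KL_loss Qt Q =
     (if absolutely_continuous Q Qt \<and> integrable Qt (entropy_density (exp 1) Q Qt)
      then ennreal (KL_divergence (exp 1) Q Qt) else \<infinity>)"

definition risk :: "(nat \<Rightarrow> real) measure \<Rightarrow> (nat \<Rightarrow> real) measure
     \<Rightarrow> ((nat \<Rightarrow> real) \<Rightarrow> (nat \<Rightarrow> real) measure) \<Rightarrow> ennreal" where
  "risk P Qt Qhat = (\<integral>\<^sup>+ x. KL_loss Qt (Qhat x) \<partial>P)"

definition bayes_pred :: "real \<Rightarrow> real \<Rightarrow> (nat \<Rightarrow> real) \<Rightarrow> (nat \<Rightarrow> real) \<Rightarrow> (nat \<Rightarrow> real) measure" where
  "bayes_pred \<epsilon> \<epsilon>' \<tau> x = PiM UNIV (\<lambda>i.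
     if \<tau> i = 0 then gauss 0 (\<epsilon>'\<^sup>2)
     else gauss ((1 / \<epsilon>\<^sup>2) / (1 / \<epsilon>\<^sup>2 + 1 / (\<tau> i)\<^sup>2) * x i)
                (1 / (1 / \<epsilon>\<^sup>2 + 1 / (\<tau> i)\<^sup>2) + \<epsilon>'\<^sup>2))"

end

theory Submission
  imports Defs
begin


lemma PiM_UNIV_integral_prod:
  fixes M :: "'i \<Rightarrow> 'a measure" and f :: "'i \<Rightarrow> 'a \<Rightarrow> real"
  assumes P: "\<And>i. prob_space (M i)" and J: "finite J"
    and int: "\<And>j. j\<in>J \<Longrightarrow> integrable (M j) (f j)"
  shows "integrable (PiM UNIV M) (\<lambda>\<omega>. \<Prod>j\<in>J. f j (\<omega> j))"
    and "(\<integral>\<omega>. (\<Prod>j\<in>J. f j (\<omega> j)) \<partial>PiM UNIV M) = (\<Prod>j\<in>J. integral\<^sup>L (M j) (f j))"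
proof -
  interpret product_prob_space M UNIV
    unfolding product_prob_space_def product_sigma_finite_def product_prob_space_axioms_def
    by (simp add: P prob_space_imp_sigma_finite)
  have D: "distr (PiM UNIV M) (PiM J M) (\<lambda>x. restrict x J) = PiM J M"
    by (rule distr_PiM_restrict_finite) (auto simp: J)
  have [measurable]: "f j \<in> borel_measurable (M j)" if "j \<in> J" for j
    using int[OF that] by auto
  have meas: "(\<lambda>y. \<Prod>j\<in>J. f j (y j)) \<in> borel_measurable (PiM J M)"
    by (intro borel_measurable_prod) (auto intro: measurable_compose[OF measurable_component_singleton])
  have eq: "(\<lambda>\<omega>. \<Prod>j\<in>J. f j (\<omega> j)) = (\<lambda>\<omega>. (\<lambda>y. \<Prod>j\<in>J. f j (y j)) (restrict \<omega> J))"
    by (auto intro!: prod.cong)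
  have rm: "(\<lambda>x. restrict x J) \<in> measurable (PiM UNIV M) (PiM J M)"
    by (rule measurable_restrict_subset) auto
  have iJ: "integrable (PiM J M) (\<lambda>y. \<Prod>j\<in>J. f j (y j))"
    by (rule product_integrable_prod) (auto simp: J int)
  show "integrable (PiM UNIV M) (\<lambda>\<omega>. \<Prod>j\<in>J. f j (\<omega> j))"
    unfolding eq using iJ meas rm
    by (subst integrable_distr_eq[symmetric, where N="PiM J M"]) (auto simp: D)
  have "(\<integral>\<omega>. (\<Prod>j\<in>J. f j (\<omega> j)) \<partial>PiM UNIV M) = (\<integral>y. (\<Prod>j\<in>J. f j (y j)) \<partial>distr (PiM UNIV M) (PiM J M) (\<lambda>x. restrict x J))"
    unfolding eq using meas rm by (subst integral_distr) auto
  also have "\<dots> = (\<Prod>j\<in>J. integral\<^sup>L (M j) (f j))"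
    unfolding D by (rule product_integral_prod) (auto simp: J int)
  finally show "(\<integral>\<omega>. (\<Prod>j\<in>J. f j (\<omega> j)) \<partial>PiM UNIV M) = (\<Prod>j\<in>J. integral\<^sup>L (M j) (f j))" .
qed

lemma PiM_UNIV_nn_integral_prod:
  fixes M :: "'i \<Rightarrow> 'a measure" and f :: "'i \<Rightarrow> 'a \<Rightarrow> ennreal"
  assumes P: "\<And>i. prob_space (M i)" and J: "finite J"
    and mf: "\<And>j. j\<in>J \<Longrightarrow> f j \<in> borel_measurable (M j)"
  shows "(\<integral>\<^sup>+\<omega>. (\<Prod>j\<in>J. f j (\<omega> j)) \<partial>PiM UNIV M) = (\<Prod>j\<in>J. integral\<^sup>N (M j) (f j))"
proof -
  interpret product_prob_space M UNIV
    unfolding product_prob_space_def product_sigma_finite_def product_prob_space_axioms_def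
    by (simp add: P prob_space_imp_sigma_finite)
  have D: "distr (PiM UNIV M) (PiM J M) (\<lambda>x. restrict x J) = PiM J M"
    by (rule distr_PiM_restrict_finite) (auto simp: J)
  have [measurable]: "f j \<in> borel_measurable (M j)" if "j \<in> J" for j
    using mf[OF that] by auto
  have meas: "(\<lambda>y. \<Prod>j\<in>J. f j (y j)) \<in> borel_measurable (PiM J M)"
    by (intro borel_measurable_prod_ennreal) (auto intro: measurable_compose[OF measurable_component_singleton])
  have eq: "(\<lambda>\<omega>. \<Prod>j\<in>J. f j (\<omega> j)) = (\<lambda>\<omega>. (\<lambda>y. \<Prod>j\<in>J. f j (y j)) (restrict \<omega> J))"
    by (auto intro!: prod.cong)
  have rm: "(\<lambda>x. restrict x J) \<in> measurable (PiM UNIV M) (PiM J M)"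
    by (rule measurable_restrict_subset) auto
  have "(\<integral>\<^sup>+\<omega>. (\<Prod>j\<in>J. f j (\<omega> j)) \<partial>PiM UNIV M) = (\<integral>\<^sup>+y. (\<Prod>j\<in>J. f j (y j)) \<partial>distr (PiM UNIV M) (PiM J M) (\<lambda>x. restrict x J))"
    unfolding eq using meas rm by (subst nn_integral_distr) auto
  also have "\<dots> = (\<Prod>j\<in>J. integral\<^sup>N (M j) (f j))"
    unfolding D by (rule product_nn_integral_prod) (auto simp: J mf)
  finally show ?thesis .
qed

lemma PiM_UNIV_restrict_cong:
  fixes M M' :: "'i \<Rightarrow> 'a measure"
  assumes P: "\<And>i. prob_space (M i)" and P': "\<And>i. prob_space (M' i)" and J: "finite J"
    and eqJ: "\<And>j. j\<in>J \<Longrightarrow> M' j = M j"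
    and h: "h \<in> borel_measurable (PiM J M)"
  shows "(\<integral>\<^sup>+\<omega>. h (restrict \<omega> J) \<partial>PiM UNIV M') = (\<integral>\<^sup>+\<omega>. h (restrict \<omega> J) \<partial>PiM UNIV M)"
proof -
  interpret A: product_prob_space M UNIV
    unfolding product_prob_space_def product_sigma_finite_def product_prob_space_axioms_def
    by (simp add: P prob_space_imp_sigma_finite)
  interpret B: product_prob_space M' UNIV
    unfolding product_prob_space_def product_sigma_finite_def product_prob_space_axioms_def
    by (simp add: P' prob_space_imp_sigma_finite)
  have PJ: "PiM J M' = PiM J M" by (rule PiM_cong) (auto simp: eqJ)
  have DA: "distr (PiM UNIV M) (PiM J M) (\<lambda>x. restrict x J) = PiM J M"
    by (rule A.distr_PiM_restrict_finite) (auto simp: J)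
  have DB: "distr (PiM UNIV M') (PiM J M) (\<lambda>x. restrict x J) = PiM J M"
    using B.distr_PiM_restrict_finite[of J] J by (simp add: PJ)
  have rmA: "(\<lambda>x. restrict x J) \<in> measurable (PiM UNIV M) (PiM J M)"
    by (rule measurable_restrict_subset) auto
  have rmB: "(\<lambda>x. restrict x J) \<in> measurable (PiM UNIV M') (PiM J M)"
    unfolding PJ[symmetric] by (rule measurable_restrict_subset) auto
  have "(\<integral>\<^sup>+\<omega>. h (restrict \<omega> J) \<partial>PiM UNIV M') = (\<integral>\<^sup>+y. h y \<partial>distr (PiM UNIV M') (PiM J M) (\<lambda>x. restrict x J))"
    using h rmB by (subst nn_integral_distr) auto
  also have "\<dots> = (\<integral>\<^sup>+y. h y \<partial>distr (PiM UNIV M) (PiM J M) (\<lambda>x. restrict x J))"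
    by (simp add: DA DB)
  also have "\<dots> = (\<integral>\<^sup>+\<omega>. h (restrict \<omega> J) \<partial>PiM UNIV M)"
    using h rmA by (subst nn_integral_distr) auto
  finally show ?thesis .
qed

lemma PiM_UNIV_restrict_cong_L:
  fixes M M' :: "'i \<Rightarrow> 'a measure" and h :: "_ \<Rightarrow> real"
  assumes P: "\<And>i. prob_space (M i)" and P': "\<And>i. prob_space (M' i)" and J: "finite J"
    and eqJ: "\<And>j. j\<in>J \<Longrightarrow> M' j = M j"
    and h: "h \<in> borel_measurable (PiM J M)"
  shows "integrable (PiM UNIV M') (\<lambda>\<omega>. h (restrict \<omega> J)) = integrable (PiM UNIV M) (\<lambda>\<omega>. h (restrict \<omega> J))"
    and "(\<integral>\<omega>. h (restrict \<omega> J) \<partial>PiM UNIV M') = (\<integral>\<omega>. h (restrict \<omega> J) \<partial>PiM UNIV M)"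
proof -
  interpret A: product_prob_space M UNIV
    unfolding product_prob_space_def product_sigma_finite_def product_prob_space_axioms_def
    by (simp add: P prob_space_imp_sigma_finite)
  interpret B: product_prob_space M' UNIV
    unfolding product_prob_space_def product_sigma_finite_def product_prob_space_axioms_def
    by (simp add: P' prob_space_imp_sigma_finite)
  have PJ: "PiM J M' = PiM J M" by (rule PiM_cong) (auto simp: eqJ)
  have DA: "distr (PiM UNIV M) (PiM J M) (\<lambda>x. restrict x J) = PiM J M"
    by (rule A.distr_PiM_restrict_finite) (auto simp: J)
  have DB: "distr (PiM UNIV M') (PiM J M) (\<lambda>x. restrict x J) = PiM J M"
    using B.distr_PiM_restrict_finite[of J] J by (simp add: PJ)
  have rmA: "(\<lambda>x. restrict x J) \<in> measurable (PiM UNIV M) (PiM J M)"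
    by (rule measurable_restrict_subset) auto
  have rmB: "(\<lambda>x. restrict x J) \<in> measurable (PiM UNIV M') (PiM J M)"
    unfolding PJ[symmetric] by (rule measurable_restrict_subset) auto
  have "integrable (PiM UNIV M') (\<lambda>\<omega>. h (restrict \<omega> J)) = integrable (PiM J M) h"
    using integrable_distr_eq[OF rmB h] by (simp add: DB)
  also have "\<dots> = integrable (PiM UNIV M) (\<lambda>\<omega>. h (restrict \<omega> J))"
    using integrable_distr_eq[OF rmA h] by (simp add: DA)
  finally show "integrable (PiM UNIV M') (\<lambda>\<omega>. h (restrict \<omega> J)) = integrable (PiM UNIV M) (\<lambda>\<omega>. h (restrict \<omega> J))" .
  have "(\<integral>\<omega>. h (restrict \<omega> J) \<partial>PiM UNIV M') = (\<integral>y. h y \<partial>PiM J M)"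
    using integral_distr[OF rmB h] by (simp add: DB)
  also have "\<dots> = (\<integral>\<omega>. h (restrict \<omega> J) \<partial>PiM UNIV M)"
    using integral_distr[OF rmA h] by (simp add: DA)
  finally show "(\<integral>\<omega>. h (restrict \<omega> J) \<partial>PiM UNIV M') = (\<integral>\<omega>. h (restrict \<omega> J) \<partial>PiM UNIV M)" .
qed



lemma PiM_finite_change:
  fixes M :: "'i \<Rightarrow> 'a measure" and g :: "'i \<Rightarrow> 'a \<Rightarrow> ennreal"
  assumes P: "\<And>i. prob_space (M i)" and F: "finite F"
    and gm: "\<And>i. g i \<in> borel_measurable (M i)"
    and gP: "\<And>i. i \<in> F \<Longrightarrow> prob_space (density (M i) (g i))"
  shows "PiM UNIV (\<lambda>i. if i \<in> F then density (M i) (g i) else M i)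
       = density (PiM UNIV M) (\<lambda>\<omega>. \<Prod>i\<in>F. g i (\<omega> i))"
proof -
  define M' where "M' = (\<lambda>i. if i \<in> F then density (M i) (g i) else M i)"
  have P': "prob_space (M' i)" for i using P gP by (auto simp: M'_def)
  have sM': "sets (M' i) = sets (M i)" for i by (auto simp: M'_def)
  have spM': "space (M' i) = space (M i)" for i by (auto simp: M'_def)
  interpret A: product_prob_space M UNIV
    unfolding product_prob_space_def product_sigma_finite_def product_prob_space_axioms_def
    by (simp add: P prob_space_imp_sigma_finite)
  interpret B: product_prob_space M' UNIV
    unfolding product_prob_space_def product_sigma_finite_def product_prob_space_axioms_def
    by (simp add: P' prob_space_imp_sigma_finite)
  have [measurable]: "g i \<in> borel_measurable (M i)" for i by (rule gm)
  have Gm: "(\<lambda>\<omega>. \<Prod>i\<in>F. g i (\<omega> i)) \<in> borel_measurable (PiM UNIV M)"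
    by (intro borel_measurable_prod_ennreal) (auto intro: measurable_compose[OF measurable_component_singleton])
  have sPi: "sets (PiM UNIV M') = sets (PiM UNIV M)"
    by (rule sets_PiM_cong) (auto simp: sM')
  have "density (PiM UNIV M) (\<lambda>\<omega>. \<Prod>i\<in>F. g i (\<omega> i)) = PiM UNIV M'"
  proof (rule B.PiM_eq)
    show "sets (density (PiM UNIV M) (\<lambda>\<omega>. \<Prod>i\<in>F. g i (\<omega> i))) = sets (PiM UNIV M')"
      by (simp add: sPi)
  next
    fix J :: "'i set" and A assume J: "finite J" "J \<subseteq> UNIV" and A: "\<And>j. j \<in> J \<Longrightarrow> A j \<in> sets (M' j)"
    have A': "A j \<in> sets (M j)" if "j \<in> J" for j using A[OF that] by (simp add: sM')
    have emb: "prod_emb UNIV M' J (Pi\<^sub>E J A) = prod_emb UNIV M J (Pi\<^sub>E J A)"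
      by (simp add: prod_emb_def spM')
    have embS: "prod_emb UNIV M J (Pi\<^sub>E J A) \<in> sets (PiM UNIV M)"
      using J A' by (intro sets_PiM_I) auto
    define h where "h i y = (if i \<in> F then g i y else 1) * (if i \<in> J then indicator (A i) y else 1)" for i y
    have hm: "h i \<in> borel_measurable (M i)" for i
    proof (cases "i \<in> J")
      case True then have [measurable]: "A i \<in> sets (M i)" by (rule A')
      show ?thesis unfolding h_def by measurable
    next
      case False then show ?thesis unfolding h_def by simp
    qed
    have ind: "(\<Prod>i\<in>F. g i (\<omega> i)) * indicator (prod_emb UNIV M J (Pi\<^sub>E J A)) \<omega> = (\<Prod>i\<in>F \<union> J. h i (\<omega> i))"
      if "\<omega> \<in> space (PiM UNIV M)" for \<omega>
    proof -
      have "indicator (prod_emb UNIV M J (Pi\<^sub>E J A)) \<omega> = (\<Prod>j\<in>J. indicator (A j) (\<omega> j) :: ennreal)"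
        using that J by (auto simp: prod_emb_def space_PiM indicator_def PiE_def Pi_def prod_zero_iff split: if_splits)
      moreover have "(\<Prod>i\<in>F \<union> J. h i (\<omega> i)) = (\<Prod>i\<in>F \<union> J. (if i \<in> F then g i (\<omega> i) else 1)) * (\<Prod>i\<in>F \<union> J. (if i \<in> J then indicator (A i) (\<omega> i) else 1))"
        by (simp add: h_def prod.distrib)
      moreover have "(\<Prod>i\<in>F \<union> J. (if i \<in> F then g i (\<omega> i) else 1)) = (\<Prod>i\<in>F. g i (\<omega> i))"
        using F J by (subst prod.If_cases) (auto simp: Int_absorb2)
      moreover have "(\<Prod>i\<in>F \<union> J. (if i \<in> J then indicator (A i) (\<omega> i) else 1)) = (\<Prod>j\<in>J. indicator (A j) (\<omega> j) :: ennreal)"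
        using F J by (subst prod.If_cases) (auto simp: Int_absorb1)
      ultimately show ?thesis by simp
    qed
    have "emeasure (density (PiM UNIV M) (\<lambda>\<omega>. \<Prod>i\<in>F. g i (\<omega> i))) (prod_emb UNIV M' J (Pi\<^sub>E J A))
       = (\<integral>\<^sup>+\<omega>. (\<Prod>i\<in>F. g i (\<omega> i)) * indicator (prod_emb UNIV M J (Pi\<^sub>E J A)) \<omega> \<partial>PiM UNIV M)"
      unfolding emb using Gm embS by (simp add: emeasure_density)
    also have "\<dots> = (\<integral>\<^sup>+\<omega>. (\<Prod>i\<in>F \<union> J. h i (\<omega> i)) \<partial>PiM UNIV M)"
      by (rule nn_integral_cong) (simp add: ind)
    also have "\<dots> = (\<Prod>i\<in>F \<union> J. integral\<^sup>N (M i) (h i))"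
      using F J hm by (intro PiM_UNIV_nn_integral_prod P) auto
    also have "\<dots> = (\<Prod>i\<in>J. integral\<^sup>N (M i) (h i)) * (\<Prod>i\<in>F - J. integral\<^sup>N (M i) (h i))"
      using F J by (subst prod.union_disjoint[symmetric]) (auto intro!: prod.cong)
    also have "(\<Prod>i\<in>F - J. integral\<^sup>N (M i) (h i)) = 1"
    proof (rule prod.neutral, safe)
      fix i assume i: "i \<in> F" "i \<notin> J"
      interpret prob_space "density (M i) (g i)" using gP[OF i(1)] .
      have "integral\<^sup>N (M i) (h i) = (\<integral>\<^sup>+y. g i y * indicator (space (M i)) y \<partial>M i)"
        using i by (auto simp: h_def intro!: nn_integral_cong)
      also have "\<dots> = emeasure (density (M i) (g i)) (space (density (M i) (g i)))"
        by (simp add: emeasure_density)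
      finally show "integral\<^sup>N (M i) (h i) = 1" using emeasure_space_1 by simp
    qed
    also have "(\<Prod>i\<in>J. integral\<^sup>N (M i) (h i)) = (\<Prod>j\<in>J. emeasure (M' j) (A j))"
    proof (rule prod.cong, simp)
      fix j assume j: "j \<in> J"
      show "integral\<^sup>N (M j) (h j) = emeasure (M' j) (A j)"
      proof (cases "j \<in> F")
        case True
        have "integral\<^sup>N (M j) (h j) = (\<integral>\<^sup>+y. g j y * indicator (A j) y \<partial>M j)"
          using True j by (auto simp: h_def intro!: nn_integral_cong)
        then show ?thesis using True j A'[OF j] by (simp add: M'_def emeasure_density)
      next
        case False
        have "integral\<^sup>N (M j) (h j) = (\<integral>\<^sup>+y. indicator (A j) y \<partial>M j)"
          using False j by (auto simp: h_def intro!: nn_integral_cong)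
        then show ?thesis using False j A'[OF j] by (simp add: M'_def)
      qed
    qed
    finally show "emeasure (density (PiM UNIV M) (\<lambda>\<omega>. \<Prod>i\<in>F. g i (\<omega> i))) (prod_emb UNIV M' J (Pi\<^sub>E J A)) = (\<Prod>j\<in>J. emeasure (M' j) (A j))"
      by simp
  qed
  then show ?thesis by (simp add: M'_def)
qed



lemma PiM_UNIV_block_second_moment:
  fixes M :: "'i \<Rightarrow> 'a measure" and f :: "'i \<Rightarrow> 'a \<Rightarrow> real"
  assumes P: "\<And>i. prob_space (M i)" and B: "finite B"
    and int1: "\<And>i. integrable (M i) (f i)"
    and int2: "\<And>i. integrable (M i) (\<lambda>y. (f i y)\<^sup>2)"
    and mean0: "\<And>i. integral\<^sup>L (M i) (f i) = 0"
  shows "integrable (PiM UNIV M) (\<lambda>\<omega>. (\<Sum>i\<in>B. f i (\<omega> i))\<^sup>2)"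
    and "(\<integral>\<omega>. (\<Sum>i\<in>B. f i (\<omega> i))\<^sup>2 \<partial>PiM UNIV M) = (\<Sum>i\<in>B. \<integral>y. (f i y)\<^sup>2 \<partial>M i)"
proof -
  have sq: "(\<Sum>i\<in>B. f i (\<omega> i))\<^sup>2 = (\<Sum>i\<in>B. \<Sum>j\<in>B. f i (\<omega> i) * f j (\<omega> j))" for \<omega>
    by (simp add: power2_eq_square sum_product)
  have cross: "integrable (PiM UNIV M) (\<lambda>\<omega>. f i (\<omega> i) * f j (\<omega> j)) \<and>
      (\<integral>\<omega>. f i (\<omega> i) * f j (\<omega> j) \<partial>PiM UNIV M) = (if i = j then \<integral>y. (f i y)\<^sup>2 \<partial>M i else 0)" for i j
  proof (cases "i = j")
    case True
    have e: "(\<lambda>\<omega>. f i (\<omega> i) * f j (\<omega> j)) = (\<lambda>\<omega>. \<Prod>l\<in>{i}. (\<lambda>l y. (f l y)\<^sup>2) l (\<omega> l))"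
      using True by (simp add: power2_eq_square)
    show ?thesis unfolding e
      using PiM_UNIV_integral_prod[of M "{i}" "\<lambda>l y. (f l y)\<^sup>2", OF P] int2 True by simp
  next
    case False
    have e: "(\<lambda>\<omega>. f i (\<omega> i) * f j (\<omega> j)) = (\<lambda>\<omega>. \<Prod>l\<in>{i,j}. f l (\<omega> l))"
      using False by simp
    show ?thesis unfolding e
      using PiM_UNIV_integral_prod[of M "{i,j}" f, OF P] int1 mean0 False by simp
  qed
  show "integrable (PiM UNIV M) (\<lambda>\<omega>. (\<Sum>i\<in>B. f i (\<omega> i))\<^sup>2)"
    unfolding sq using cross by (simp add: integrable_sum)
  have "(\<integral>\<omega>. (\<Sum>i\<in>B. f i (\<omega> i))\<^sup>2 \<partial>PiM UNIV M) = (\<Sum>i\<in>B. \<Sum>j\<in>B. \<integral>\<omega>. f i (\<omega> i) * f j (\<omega> j) \<partial>PiM UNIV M)"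
    unfolding sq using cross by (simp add: integral_sum integrable_sum del: integral_mult_right_zero integral_mult_left_zero)
  also have "\<dots> = (\<Sum>i\<in>B. \<Sum>j\<in>B. (if i = j then \<integral>y. (f i y)\<^sup>2 \<partial>M i else 0))"
    using cross by simp
  also have "\<dots> = (\<Sum>i\<in>B. \<integral>y. (f i y)\<^sup>2 \<partial>M i)"
    using B by (simp add: sum.delta)
  finally show "(\<integral>\<omega>. (\<Sum>i\<in>B. f i (\<omega> i))\<^sup>2 \<partial>PiM UNIV M) = (\<Sum>i\<in>B. \<integral>y. (f i y)\<^sup>2 \<partial>M i)" .
qed

lemma abs_le_quad: fixes a y :: real assumes "a > 0" shows "\<bar>y\<bar> \<le> (a * y\<^sup>2 + 1 / a) / 2"
proof -
  have "0 \<le> (a * \<bar>y\<bar> - 1)\<^sup>2" by simp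
  then have "2 * a * \<bar>y\<bar> \<le> a\<^sup>2 * y\<^sup>2 + 1" by (simp add: power2_eq_square algebra_simps)
  then show ?thesis using assms by (simp add: field_simps power2_eq_square)
qed



lemma block_sum:
  fixes h :: "nat \<Rightarrow> 'b::comm_monoid_add"
  assumes "n 0 = 0" "mono n"
  shows "(\<Sum>k<K. \<Sum>i\<in>{n k..<n (Suc k)}. h i) = (\<Sum>i<n K. h i)"
proof (induction K)
  case 0 then show ?case using assms by simp
next
  case (Suc K)
  have le: "n K \<le> n (Suc K)" using assms(2) by (simp add: monoD)
  have "(\<Sum>i<n (Suc K). h i) = (\<Sum>i\<in>{0..<n K}. h i) + (\<Sum>i\<in>{n K..<n (Suc K)}. h i)"
    using le by (simp add: sum.atLeastLessThan_concat atLeast0LessThan[symmetric])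
  then show ?case using Suc by (simp add: atLeast0LessThan)
qed

lemma block_le_tail:
  fixes v :: "nat \<Rightarrow> real"
  assumes "summable v" "\<And>i. 0 \<le> v i" "a \<le> b"
  shows "(\<Sum>i\<in>{a..<b}. v i) \<le> (\<Sum>j. v (j + a))"
proof -
  have "(\<Sum>i\<in>{a..<b}. v i) = (\<Sum>j\<in>{0..<b-a}. v (j + a))"
    using sum.shift_bounds_nat_ivl[of v 0 a "b - a"] assms(3) by simp
  also have "\<dots> \<le> (\<Sum>j. v (j + a))"
    using assms by (intro sum_le_suminf) auto
  finally show ?thesis .
qed

lemma tail_tendsto_zero:
  fixes v :: "nat \<Rightarrow> real"
  assumes "summable v"
  shows "(\<lambda>m. \<Sum>j. v (j + m)) \<longlonglongrightarrow> 0"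
proof -
  have "(\<lambda>m. \<Sum>j. v (j + m)) = (\<lambda>m. suminf v - (\<Sum>i<m. v i))"
    using assms by (simp add: suminf_minus_initial_segment)
  moreover have "(\<lambda>m. suminf v - (\<Sum>i<m. v i)) \<longlonglongrightarrow> suminf v - suminf v"
    using assms by (intro tendsto_intros summable_LIMSEQ)
  ultimately show ?thesis by simp
qed

lemma ennreal_squeeze:
  fixes a b c d :: ennreal
  assumes "a \<le> b" "c \<le> d" "1 \<le> a + c" "b + d = 1"
  shows "a = b"
proof -
  have "b \<le> 1" "d \<le> 1" using assms(4) by (metis le_iff_add add.commute)+
  then obtain b' d' where b: "b = ennreal b'" "0 \<le> b'" and d: "d = ennreal d'" "0 \<le> d'"
    by (metis ennreal_cases ennreal_one_neq_top top.extremum_unique)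
  obtain a' c' where a: "a = ennreal a'" "0 \<le> a'" and c: "c = ennreal c'" "0 \<le> c'"
    using assms(1,2) b d by (metis ennreal_cases ennreal_le_iff2 ennreal_neq_top top.extremum_uniqueI)
  have "a' \<le> b'" "c' \<le> d'" using assms(1,2) a b c d by (auto simp: ennreal_le_iff)
  moreover have "1 \<le> a' + c'" using assms(3) a c by (simp flip: ennreal_plus add: ennreal_1[symmetric] del: ennreal_1 ennreal_plus)
  moreover have "b' + d' = 1" using assms(4) b d by (simp flip: ennreal_plus add: ennreal_1[symmetric] del: ennreal_1 ennreal_plus)
  ultimately show ?thesis using a b by simp
qed



theorem product_KL_abstract:
  fixes M :: "nat \<Rightarrow> 'a measure" and g :: "nat \<Rightarrow> 'a \<Rightarrow> real" and kk vv :: "nat \<Rightarrow> real"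
  assumes P: "\<And>i. prob_space (M i)"
    and gm: "\<And>i. g i \<in> borel_measurable (M i)"
    and gpos: "\<And>i y. 0 < g i y"
    and gP: "\<And>i. prob_space (density (M i) (\<lambda>y. ennreal (g i y)))"
    and Lint: "\<And>i. integrable (M i) (\<lambda>y. ln (g i y))"
    and L2int: "\<And>i. integrable (M i) (\<lambda>y. (ln (g i y))\<^sup>2)"
    and kk: "\<And>i. kk i = (\<integral>y. - ln (g i y) \<partial>M i)"
    and vv: "\<And>i. vv i = (\<integral>y. (- ln (g i y) - kk i)\<^sup>2 \<partial>M i)"
    and kpos: "\<And>i. 0 \<le> kk i" and ksum: "summable kk" and vsum: "summable vv"
  shows "absolutely_continuous (PiM UNIV M) (PiM UNIV (\<lambda>i. density (M i) (\<lambda>y. ennreal (g i y)))) \<and>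
     absolutely_continuous (PiM UNIV (\<lambda>i. density (M i) (\<lambda>y. ennreal (g i y)))) (PiM UNIV M) \<and>
     integrable (PiM UNIV M) (entropy_density (exp 1) (PiM UNIV (\<lambda>i. density (M i) (\<lambda>y. ennreal (g i y)))) (PiM UNIV M)) \<and>
     KL_divergence (exp 1) (PiM UNIV (\<lambda>i. density (M i) (\<lambda>y. ennreal (g i y)))) (PiM UNIV M) = suminf kk"
proof -
  define N where "N i = density (M i) (\<lambda>y. ennreal (g i y))" for i
  define PP where "PP = PiM UNIV M"
  define QQ where "QQ = PiM UNIV N"
  define L where "L i y = - ln (g i y)" for i y
  interpret PM: product_prob_space M UNIV
    unfolding product_prob_space_def product_sigma_finite_def product_prob_space_axioms_def
    by (simp add: P prob_space_imp_sigma_finite)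
  have PN: "prob_space (N i)" for i using gP by (simp add: N_def)
  interpret PN: product_prob_space N UNIV
    unfolding product_prob_space_def product_sigma_finite_def product_prob_space_axioms_def
    by (simp add: PN prob_space_imp_sigma_finite)
  interpret PPs: prob_space PP unfolding PP_def by (rule prob_space_PiM) (rule P)
  have [measurable]: "g i \<in> borel_measurable (M i)" for i by (rule gm)
  have Lm[measurable]: "L i \<in> borel_measurable (M i)" for i unfolding L_def by measurable
  have sN: "sets (N i) = sets (M i)" for i by (simp add: N_def)
  have spN: "space (N i) = space (M i)" for i by (simp add: N_def)
  have sQP: "sets QQ = sets PP" unfolding QQ_def PP_def by (rule sets_PiM_cong) (auto simp: sN)
  have spQP: "space QQ = space PP" using sQP by (rule sets_eq_imp_space_eq)
  have L_eq: "L i = (\<lambda>y. - ln (g i y))" for i by (simp add: L_def fun_eq_iff)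
  have LI: "integrable (M i) (L i)" for i using Lint[of i] by (simp add: L_eq)
  have kkL: "kk i = integral\<^sup>L (M i) (L i)" for i by (simp add: kk L_eq)
  have LI2: "integrable (M i) (\<lambda>y. (L i y - kk i)\<^sup>2)" for i
  proof -
    interpret prob_space "M i" by (rule P)
    have "(\<lambda>y. (L i y - kk i)\<^sup>2) = (\<lambda>y. (ln (g i y))\<^sup>2 + 2 * kk i * ln (g i y) + (kk i)\<^sup>2)"
      by (auto simp: L_def power2_eq_square algebra_simps)
    then show ?thesis using L2int[of i] Lint[of i] by simp
  qed
  have mean0: "integral\<^sup>L (M i) (\<lambda>y. L i y - kk i) = 0" for i
    using LI[of i] prob_space.prob_space[OF P[of i]] by (simp add: kkL)
  have vvL: "vv i = (\<integral>y. (L i y - kk i)\<^sup>2 \<partial>M i)" for i by (simp add: vv L_def)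
  have vpos: "0 \<le> vv i" for i by (simp add: vvL)
  have single: "integrable PP (\<lambda>\<omega>. L i (\<omega> i)) \<and> (\<integral>\<omega>. L i (\<omega> i) \<partial>PP) = kk i" for i
    using PiM_UNIV_integral_prod[of M "{i}" L, OF P] LI kkL by (simp add: PP_def)
  have block2: "integrable PP (\<lambda>\<omega>. (\<Sum>i\<in>B. L i (\<omega> i) - kk i)\<^sup>2) \<and>
      (\<integral>\<omega>. (\<Sum>i\<in>B. L i (\<omega> i) - kk i)\<^sup>2 \<partial>PP) = (\<Sum>i\<in>B. vv i)" if "finite B" for B
    using PiM_UNIV_block_second_moment[of M B "\<lambda>i y. L i y - kk i", OF P that] LI LI2 mean0
    by (simp add: PP_def vvL)
  define t where "t m = (\<Sum>j. vv (j + m))" for m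
  have t0: "t \<longlonglongrightarrow> 0" unfolding t_def by (rule tail_tendsto_zero[OF vsum])
  have "\<forall>k. \<exists>N0. \<forall>m\<ge>N0. t m \<le> (1/4)^k"
  proof
    fix k :: nat
    have "eventually (\<lambda>m. t m < (1/4)^k) sequentially"
      using order_tendstoD(2)[OF t0, of "(1/4)^k"] by simp
    then show "\<exists>N0. \<forall>m\<ge>N0. t m \<le> (1/4)^k" unfolding eventually_sequentially by (meson less_imp_le)
  qed
  then obtain Nk where Nk: "\<And>k m. m \<ge> Nk k \<Longrightarrow> t m \<le> (1/4)^k" by metis
  define n where "n = rec_nat 0 (\<lambda>k nk. max (Suc nk) (Nk (Suc k)))"
  have n0: "n 0 = 0" and nS: "n (Suc k) = max (Suc (n k)) (Nk (Suc k))" for k by (simp_all add: n_def)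
  have smn: "strict_mono n" unfolding strict_mono_Suc_iff by (simp add: nS less_max_iff_disj)
  have mn: "mono n" using smn by (rule strict_mono_mono)
  have nge: "k \<le> n k" for k using seq_suble[OF smn] .
  define Bk where "Bk k = {n k..<n (Suc k)}" for k
  have finB: "finite (Bk k)" for k by (simp add: Bk_def)
  have vblock: "(\<Sum>i\<in>Bk k. vv i) \<le> (1/4)^k" if k1: "1 \<le> k" for k
  proof -
    obtain k' where k: "k = Suc k'" using k1 by (cases k) auto
    have "(\<Sum>i\<in>Bk k. vv i) \<le> t (n k)"
      unfolding Bk_def t_def using vsum vpos mn by (intro block_le_tail) (auto simp: monoD)
    also have "\<dots> \<le> (1/4)^k" using Nk[of k "n k"] by (simp add: k nS)
    finally show ?thesis .
  qed
  define D where "D k \<omega> = (\<Sum>i\<in>Bk k. L i (\<omega> i))" for k \<omega>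
  define c where "c k = (\<Sum>i\<in>Bk k. kk i)" for k
  have Dm[measurable]: "D k \<in> borel_measurable PP" for k
    unfolding D_def PP_def by measurable
  have DI: "integrable PP (D k) \<and> integral\<^sup>L PP (D k) = c k" for k
    using single unfolding D_def c_def by (simp add: integral_sum)
  have csum: "(\<Sum>k<K. c k) = (\<Sum>i<n K. kk i)" for K
    unfolding c_def Bk_def by (rule block_sum[OF n0 mn])
  have c_sums: "c sums suminf kk"
  proof -
    have "(\<lambda>K. \<Sum>i<n K. kk i) \<longlonglongrightarrow> suminf kk"
      using LIMSEQ_subseq_LIMSEQ[OF summable_LIMSEQ[OF ksum] smn] by (simp add: o_def)
    then show ?thesis unfolding sums_def csum .
  qed
  have cpos: "0 \<le> c k" for k unfolding c_def by (intro sum_nonneg kpos)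
  have absD: "(\<integral>\<omega>. \<bar>D k \<omega>\<bar> \<partial>PP) \<le> ((2^k) * (\<Sum>i\<in>Bk k. vv i) + 1 / 2^k) / 2 + c k" for k
  proof -
    define Y where "Y \<omega> = (\<Sum>i\<in>Bk k. L i (\<omega> i) - kk i)" for \<omega>
    have DY: "D k \<omega> = Y \<omega> + c k" for \<omega> unfolding D_def Y_def c_def by (simp add: sum_subtractf)
    have YI2: "integrable PP (\<lambda>\<omega>. (Y \<omega>)\<^sup>2)" and YE2: "(\<integral>\<omega>. (Y \<omega>)\<^sup>2 \<partial>PP) = (\<Sum>i\<in>Bk k. vv i)"
      using block2[OF finB[of k]] by (simp_all add: Y_def)
    have YI: "integrable PP Y"
    proof -
      have "Y = (\<lambda>\<omega>. D k \<omega> - c k)" using DY by (simp add: fun_eq_iff)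
      then show ?thesis using DI[of k] by simp
    qed
    have a: "(0::real) < 2^k" by simp
    have "(\<integral>\<omega>. \<bar>D k \<omega>\<bar> \<partial>PP) \<le> (\<integral>\<omega>. ((2^k * (Y \<omega>)\<^sup>2 + 1 / 2^k) / 2 + c k) \<partial>PP)"
    proof (rule integral_mono)
      show "integrable PP (\<lambda>\<omega>. \<bar>D k \<omega>\<bar>)" using DI[of k] by simp
      show "integrable PP (\<lambda>\<omega>. (2^k * (Y \<omega>)\<^sup>2 + 1 / 2^k) / 2 + c k)" using YI2 by simp
      fix \<omega> show "\<bar>D k \<omega>\<bar> \<le> (2^k * (Y \<omega>)\<^sup>2 + 1 / 2^k) / 2 + c k"
        using abs_le_quad[OF a, of "Y \<omega>"] cpos[of k] unfolding DY by (simp add: abs_triangle_ineq[THEN order_trans])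
    qed
    also have "\<dots> = ((2^k) * (\<Sum>i\<in>Bk k. vv i) + 1 / 2^k) / 2 + c k"
      using YI2 YE2 PPs.prob_space by simp
    finally show ?thesis .
  qed
  have absDsum: "summable (\<lambda>k. \<integral>\<omega>. \<bar>D k \<omega>\<bar> \<partial>PP)"
  proof (rule summable_comparison_test_ev)
    show "summable (\<lambda>k. (1/2)^k + c k)"
      using c_sums by (intro summable_add summable_geometric) (auto simp: sums_iff)
    show "eventually (\<lambda>k. norm (\<integral>\<omega>. \<bar>D k \<omega>\<bar> \<partial>PP) \<le> (1/2)^k + c k) sequentially"
      unfolding eventually_sequentially
    proof (intro exI allI impI)
      fix k :: nat assume k: "1 \<le> k"
      have "(2::real)^k * (\<Sum>i\<in>Bk k. vv i) \<le> 2^k * (1/4)^k"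
        using vblock[OF k] by (intro mult_left_mono) auto
      also have "\<dots> = (1/2)^k" by (simp add: power_divide field_simps power_mult_distrib[symmetric])
      finally have "((2^k) * (\<Sum>i\<in>Bk k. vv i) + 1 / 2^k) / 2 \<le> (1/2)^k"
        by (simp add: power_divide)
      moreover have "0 \<le> (\<integral>\<omega>. \<bar>D k \<omega>\<bar> \<partial>PP)" by simp
      ultimately show "norm (\<integral>\<omega>. \<bar>D k \<omega>\<bar> \<partial>PP) \<le> (1/2)^k + c k"
        using absD[of k] by (simp only: real_norm_def abs_of_nonneg)
    qed
  qed
  have AEsum: "AE \<omega> in PP. summable (\<lambda>k. \<bar>D k \<omega>\<bar>)"
  proof -
    have "(\<integral>\<^sup>+\<omega>. (\<Sum>k. ennreal \<bar>D k \<omega>\<bar>) \<partial>PP) = (\<Sum>k. \<integral>\<^sup>+\<omega>. ennreal \<bar>D k \<omega>\<bar> \<partial>PP)"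
      by (rule nn_integral_suminf) auto
    also have "\<dots> = (\<Sum>k. ennreal (\<integral>\<omega>. \<bar>D k \<omega>\<bar> \<partial>PP))"
      using DI by (intro suminf_cong nn_integral_eq_integral) auto
    also have "\<dots> \<noteq> \<infinity>"
      unfolding infinity_ennreal_def by (rule ennreal_suminf_neq_top[OF absDsum]) auto
    finally have "AE \<omega> in PP. (\<Sum>k. ennreal \<bar>D k \<omega>\<bar>) \<noteq> \<infinity>"
      by (intro nn_integral_noteq_infinite) auto
    then show ?thesis by eventually_elim (auto intro: summable_suminf_not_top)
  qed
  define S where "S \<omega> = (\<Sum>k. D k \<omega>)" for \<omega>
  have Sm[measurable]: "S \<in> borel_measurable PP" unfolding S_def by measurable
  have SI: "integrable PP S" and SE: "integral\<^sup>L PP S = suminf kk"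
  proof -
    have "integrable PP (\<lambda>\<omega>. \<Sum>k. D k \<omega>)"
      using DI AEsum absDsum by (intro integrable_suminf) auto
    then show "integrable PP S" by (simp add: S_def[abs_def])
    have "(\<integral>\<omega>. (\<Sum>k. D k \<omega>) \<partial>PP) = (\<Sum>k. integral\<^sup>L PP (D k))"
      using DI AEsum absDsum by (intro integral_suminf) auto
    also have "\<dots> = suminf kk" using DI c_sums by (simp add: sums_iff)
    finally show "integral\<^sup>L PP S = suminf kk" by (simp add: S_def[abs_def])
  qed
  have Dsum: "(\<Sum>k<K. D k \<omega>) = (\<Sum>i<n K. L i (\<omega> i))" for K \<omega>
    unfolding D_def Bk_def by (rule block_sum[OF n0 mn])
  define G where "G K \<omega> = (\<Prod>i<n K. g i (\<omega> i))" for K \<omega>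
  have G_exp: "G K \<omega> = exp (- (\<Sum>k<K. D k \<omega>))" for K \<omega>
    unfolding Dsum G_def L_def by (simp add: sum_negf exp_sum gpos)
  define MK where "MK K = (\<lambda>i. if i \<in> {..<n K} then N i else M i)" for K
  define PK where "PK K = PiM UNIV (MK K)" for K
  have MKprob: "prob_space (MK K i)" for K i unfolding MK_def by (auto simp: P PN)
  have Gm[measurable]: "(\<lambda>\<omega>. G K \<omega>) \<in> borel_measurable PP" for K unfolding G_def PP_def by measurable
  have PK_eq: "PK K = density PP (\<lambda>\<omega>. ennreal (G K \<omega>))" for K
  proof -
    have "PK K = density (PiM UNIV M) (\<lambda>\<omega>. \<Prod>i\<in>{..<n K}. ennreal (g i (\<omega> i)))"
      unfolding PK_def MK_def N_def by (rule PiM_finite_change) (auto simp: P gP)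
    also have "(\<lambda>\<omega>. \<Prod>i\<in>{..<n K}. ennreal (g i (\<omega> i))) = (\<lambda>\<omega>. ennreal (G K \<omega>))"
      by (auto simp: G_def prod_ennreal gpos less_imp_le)
    finally show ?thesis by (simp add: PP_def)
  qed
  have Gconv: "AE \<omega> in PP. (\<lambda>K. G K \<omega>) \<longlonglongrightarrow> exp (- S \<omega>)"
    using AEsum
  proof eventually_elim
    case (elim \<omega>)
    then have "summable (\<lambda>k. D k \<omega>)" by (rule summable_rabs_cancel)
    then have "(\<lambda>K. \<Sum>k<K. D k \<omega>) \<longlonglongrightarrow> S \<omega>" unfolding S_def by (rule summable_LIMSEQ)
    then show ?case unfolding G_exp by (intro tendsto_intros)
  qed
  define nu where "nu = density PP (\<lambda>\<omega>. ennreal (exp (- S \<omega>)))"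
  have fatou: "emeasure nu X \<le> liminf (\<lambda>K. emeasure (PK K) X)" if X: "X \<in> sets PP" for X
  proof -
    have "emeasure nu X = (\<integral>\<^sup>+\<omega>. ennreal (exp (- S \<omega>)) * indicator X \<omega> \<partial>PP)"
      unfolding nu_def using X by (simp add: emeasure_density)
    also have "\<dots> = (\<integral>\<^sup>+\<omega>. liminf (\<lambda>K. ennreal (G K \<omega>) * indicator X \<omega>) \<partial>PP)"
    proof (rule nn_integral_cong_AE)
      show "AE \<omega> in PP. ennreal (exp (- S \<omega>)) * indicator X \<omega> = liminf (\<lambda>K. ennreal (G K \<omega>) * indicator X \<omega>)"
        using Gconv
      proof eventually_elim
        case (elim \<omega>)
        have "(\<lambda>K. ennreal (G K \<omega>) * indicator X \<omega>) \<longlonglongrightarrow> ennreal (exp (- S \<omega>)) * indicator X \<omega>"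
          using elim by (cases "\<omega> \<in> X") auto
        then show ?case by (rule lim_imp_Liminf[symmetric, rotated]) simp
      qed
    qed
    also have "\<dots> \<le> liminf (\<lambda>K. \<integral>\<^sup>+\<omega>. ennreal (G K \<omega>) * indicator X \<omega> \<partial>PP)"
      by (rule nn_integral_liminf) (use X in measurable)
    also have "\<dots> = liminf (\<lambda>K. emeasure (PK K) X)"
      using X by (simp add: PK_eq emeasure_density)
    finally show ?thesis .
  qed
  have spPK: "space (PK K) = space PP" for K unfolding PK_eq by simp
  have sPK: "sets (PK K) = sets PP" for K unfolding PK_eq by simp
  have nu_space: "space nu = space PP" and nu_sets: "sets nu = sets PP" unfolding nu_def by simp_all
  have csummable: "summable c" using c_sums by (simp add: sums_iff)
  have kappa: "1 \<le> emeasure nu (space PP)"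
  proof -
    define R where "R K \<omega> = (\<Sum>j. D (j + K) \<omega>)" for K \<omega>
    define r where "r K = (\<Sum>j. c (j + K))" for K
    have Rm[measurable]: "R K \<in> borel_measurable PP" for K unfolding R_def by measurable
    have Dres: "D k \<omega> = (\<lambda>y. \<Sum>i\<in>Bk k. L i (y i)) (restrict \<omega> (Bk k))" for k \<omega>
      by (simp add: D_def)
    have absDres: "\<bar>D k \<omega>\<bar> = (\<lambda>y. \<bar>\<Sum>i\<in>Bk k. L i (y i)\<bar>) (restrict \<omega> (Bk k))" for k \<omega>
      by (simp add: D_def)
    have hm: "(\<lambda>y. \<Sum>i\<in>Bk k. L i (y i)) \<in> borel_measurable (PiM (Bk k) M)" for k
      by measurable
    have ahm: "(\<lambda>y. \<bar>\<Sum>i\<in>Bk k. L i (y i)\<bar>) \<in> borel_measurable (PiM (Bk k) M)" for k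
      by measurable
    have bound: "ennreal (1 - r K) \<le> emeasure nu (space PP)" for K
    proof -
      interpret PKs: prob_space "PK K" unfolding PK_def by (rule prob_space_PiM) (rule MKprob)
      have MKeq: "MK K i = M i" if "i \<in> Bk (j + K)" for i j
      proof -
        have "n K \<le> n (j + K)" using mn by (simp add: monoD)
        then show ?thesis using that by (auto simp: MK_def Bk_def)
      qed
      have DK: "integrable (PK K) (D (j + K)) \<and> integral\<^sup>L (PK K) (D (j + K)) = c (j + K)" for j
        using PiM_UNIV_restrict_cong_L[of M "MK K" "Bk (j + K)", OF P MKprob finB MKeq[of _ j] hm] DI[of "j + K"]
        unfolding PK_def Dres[abs_def] by (simp add: PP_def)
      have aDK: "integrable (PK K) (\<lambda>\<omega>. \<bar>D (j + K) \<omega>\<bar>) \<and> (\<integral>\<omega>. \<bar>D (j + K) \<omega>\<bar> \<partial>PK K) = (\<integral>\<omega>. \<bar>D (j + K) \<omega>\<bar> \<partial>PP)" for j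
        using PiM_UNIV_restrict_cong_L[of M "MK K" "Bk (j + K)", OF P MKprob finB MKeq[of _ j] ahm] integrable_abs[OF conjunct1[OF DI[of "j + K"]]]
        unfolding PK_def absDres by (simp add: PP_def)
      have AEK: "AE \<omega> in PK K. summable (\<lambda>j. \<bar>D (j + K) \<omega>\<bar>)"
      proof -
        have sh: "summable (\<lambda>j. \<bar>D (j + K) \<omega>\<bar>)" if "summable (\<lambda>k. \<bar>D k \<omega>\<bar>)" for \<omega>
          using summable_iff_shift[of "\<lambda>k. \<bar>D k \<omega>\<bar>" K] that by simp
        have "AE \<omega> in PP. 0 < G K \<omega> \<longrightarrow> summable (\<lambda>j. \<bar>D (j + K) \<omega>\<bar>)"
          using AEsum by eventually_elim (simp add: sh)
        then show ?thesis unfolding PK_eq by (subst AE_density) auto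
      qed
      have DmK[measurable]: "D k \<in> borel_measurable (PK K)" for k
        using Dm[of k] by (simp add: measurable_cong_sets[OF sPK[of K] refl])
      have RI: "integrable (PK K) (R K)" and RE: "integral\<^sup>L (PK K) (R K) = r K"
      proof -
        have s: "summable (\<lambda>j. \<integral>\<omega>. norm (D (j + K) \<omega>) \<partial>PK K)"
          using summable_iff_shift[of "\<lambda>k. \<integral>\<omega>. \<bar>D k \<omega>\<bar> \<partial>PP" K] absDsum aDK by simp
        show "integrable (PK K) (R K)" unfolding R_def[abs_def]
          using DK AEK s by (intro integrable_suminf) auto
        have "integral\<^sup>L (PK K) (R K) = (\<Sum>j. integral\<^sup>L (PK K) (D (j + K)))"
          unfolding R_def[abs_def] using DK AEK s by (intro integral_suminf) auto
        then show "integral\<^sup>L (PK K) (R K) = r K" using DK by (simp add: r_def)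
      qed
      have RmK[measurable]: "R K \<in> borel_measurable (PK K)"
        using Rm[of K] by (simp add: measurable_cong_sets[OF sPK[of K] refl])
      have "ennreal (1 - r K) = ennreal (\<integral>\<omega>. 1 - R K \<omega> \<partial>PK K)"
        using RI RE PKs.prob_space by simp
      also have "\<dots> \<le> ennreal (\<integral>\<omega>. max 0 (1 - R K \<omega>) \<partial>PK K)"
        using RI by (intro ennreal_leI integral_mono) auto
      also have "\<dots> = (\<integral>\<^sup>+\<omega>. ennreal (max 0 (1 - R K \<omega>)) \<partial>PK K)"
        using RI by (intro nn_integral_eq_integral[symmetric]) auto
      also have "\<dots> \<le> (\<integral>\<^sup>+\<omega>. ennreal (exp (- R K \<omega>)) \<partial>PK K)"
      proof (intro nn_integral_mono ennreal_leI)
        fix \<omega> show "max 0 (1 - R K \<omega>) \<le> exp (- R K \<omega>)"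
          using exp_ge_add_one_self[of "- R K \<omega>"] by simp
      qed
      also have "\<dots> = (\<integral>\<^sup>+\<omega>. ennreal (G K \<omega>) * ennreal (exp (- R K \<omega>)) \<partial>PP)"
        unfolding PK_eq by (simp add: nn_integral_density)
      also have "\<dots> = (\<integral>\<^sup>+\<omega>. ennreal (exp (- S \<omega>)) \<partial>PP)"
      proof (rule nn_integral_cong_AE)
        show "AE \<omega> in PP. ennreal (G K \<omega>) * ennreal (exp (- R K \<omega>)) = ennreal (exp (- S \<omega>))"
          using AEsum
        proof eventually_elim
          case (elim \<omega>)
          then have sD: "summable (\<lambda>k. D k \<omega>)" by (rule summable_rabs_cancel)
          have "S \<omega> = R K \<omega> + (\<Sum>k<K. D k \<omega>)"
            unfolding S_def R_def by (rule suminf_split_initial_segment[OF sD])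
          then have "exp (- S \<omega>) = G K \<omega> * exp (- R K \<omega>)"
            by (simp add: G_exp exp_add[symmetric])
          then show ?case by (simp add: ennreal_mult[symmetric] G_exp)
        qed
      qed
      also have "\<dots> = emeasure nu (space PP)"
        unfolding nu_def by (simp add: emeasure_density)
      finally show ?thesis .
    qed
    have "(\<lambda>K. ennreal (1 - r K)) \<longlonglongrightarrow> ennreal (1 - 0)"
      unfolding r_def by (intro tendsto_intros tail_tendsto_zero csummable)
    then show ?thesis using bound by (intro LIMSEQ_le_const2) auto
  qed
  have cyl: "emeasure nu (prod_emb UNIV N J (Pi\<^sub>E J A)) = (\<Prod>j\<in>J. emeasure (N j) (A j))"
    if J: "finite J" and A: "\<And>j. j\<in>J \<Longrightarrow> A j \<in> sets (N j)" for J A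
  proof -
    define E where "E = prod_emb UNIV N J (Pi\<^sub>E J A)"
    obtain m where Jm: "J \<subseteq> {..<m}" using finite_nat_bounded[OF J] by blast
    have QE: "emeasure QQ E = (\<Prod>j\<in>J. emeasure (N j) (A j))"
      unfolding QQ_def E_def using J A by (intro emeasure_PiM_emb) (auto simp: PN)
    have EsQ: "E \<in> sets QQ" unfolding E_def QQ_def using J A by (intro sets_PiM_I) auto
    then have EsP: "E \<in> sets PP" by (simp add: sQP)
    have PKE: "emeasure (PK K) E = emeasure QQ E" if K: "m \<le> K" for K
    proof -
      have Jn: "j < n K" if "j \<in> J" for j using Jm that nge[of K] K by auto
      have "E = prod_emb UNIV (MK K) J (Pi\<^sub>E J A)"
      proof -
        have spMK: "space (MK K i) = space (N i)" for i by (simp add: MK_def spN)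
        show ?thesis unfolding E_def prod_emb_def by (simp only: spMK)
      qed
      note Eeq = this
      have "emeasure (PK K) E = (\<Prod>j\<in>J. emeasure (MK K j) (A j))"
        unfolding PK_def Eeq using J A Jn by (intro emeasure_PiM_emb MKprob) (auto simp: MK_def)
      also have "\<dots> = (\<Prod>j\<in>J. emeasure (N j) (A j))"
        using Jn by (intro prod.cong) (auto simp: MK_def)
      finally show ?thesis by (simp add: QE)
    qed
    interpret QQs: prob_space QQ unfolding QQ_def by (rule prob_space_PiM) (rule PN)
    have PKE': "emeasure (PK K) (space PP - E) = emeasure QQ (space PP - E)" if K: "m \<le> K" for K
    proof -
      interpret PKs: prob_space "PK K" unfolding PK_def by (rule prob_space_PiM) (rule MKprob)
      have "emeasure (PK K) (space PP - E) = emeasure (PK K) (space (PK K)) - emeasure (PK K) E"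
        using EsP by (subst emeasure_compl[symmetric]) (auto simp: spPK sPK)
      also have "\<dots> = emeasure QQ (space QQ) - emeasure QQ E"
        using PKE[OF K] by (simp add: PKs.emeasure_space_1 QQs.emeasure_space_1)
      also have "\<dots> = emeasure QQ (space PP - E)"
        using emeasure_compl[OF EsQ] by (simp add: spQP)
      finally show ?thesis .
    qed
    have liminf_ev: "liminf (\<lambda>K. emeasure (PK K) Y) = emeasure QQ Y"
      if "\<And>K. m \<le> K \<Longrightarrow> emeasure (PK K) Y = emeasure QQ Y" for Y
    proof (rule lim_imp_Liminf)
      show "(\<lambda>K. emeasure (PK K) Y) \<longlonglongrightarrow> emeasure QQ Y"
        by (rule tendsto_eventually) (use that in \<open>auto simp: eventually_sequentially\<close>)
    qed simp
    have E'sP: "space PP - E \<in> sets PP" using EsP by auto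
    have le1: "emeasure nu E \<le> emeasure QQ E"
      using fatou[OF EsP] liminf_ev[of E] PKE by simp
    have le2: "emeasure nu (space PP - E) \<le> emeasure QQ (space PP - E)"
      using fatou[OF E'sP] liminf_ev[of "space PP - E"] PKE' by simp
    have sum_nu: "emeasure nu E + emeasure nu (space PP - E) = emeasure nu (space PP)"
      using EsP E'sP by (subst plus_emeasure) (auto simp: nu_sets Un_absorb1 sets.sets_into_space)
    have sum_Q: "emeasure QQ E + emeasure QQ (space PP - E) = 1"
      using EsQ by (subst plus_emeasure) (auto simp: spQP[symmetric] Un_absorb1 sets.sets_into_space QQs.emeasure_space_1)
    have "emeasure nu E = emeasure QQ E"
      by (rule ennreal_squeeze[OF le1 le2 _ sum_Q]) (use kappa sum_nu in simp)
    then show ?thesis using QE by (simp add: E_def)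
  qed
  have nuQ: "nu = QQ"
    unfolding QQ_def
  proof (rule PN.PiM_eq)
    show "sets nu = sets (PiM UNIV N)" using sQP by (simp add: nu_sets QQ_def)
    fix J :: "nat set" and A assume "finite J" "J \<subseteq> UNIV" "\<And>j. j \<in> J \<Longrightarrow> A j \<in> sets (N j)"
    then show "emeasure nu (prod_emb UNIV N J (Pi\<^sub>E J A)) = (\<Prod>j\<in>J. emeasure (N j) (A j))"
      by (intro cyl) auto
  qed
  have Qdens: "QQ = density PP (\<lambda>\<omega>. ennreal (exp (- S \<omega>)))" using nuQ by (simp add: nu_def)
  have SmQ[measurable]: "S \<in> borel_measurable QQ"
    using Sm by (simp add: measurable_cong_sets[OF sQP refl])
  have Pdens: "density QQ (\<lambda>\<omega>. ennreal (exp (S \<omega>))) = PP"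
  proof -
    have "density QQ (\<lambda>\<omega>. ennreal (exp (S \<omega>))) = density PP (\<lambda>\<omega>. ennreal (exp (- S \<omega>)) * ennreal (exp (S \<omega>)))"
      unfolding Qdens by (rule density_density_eq) auto
    also have "(\<lambda>\<omega>. ennreal (exp (- S \<omega>)) * ennreal (exp (S \<omega>))) = (\<lambda>_. 1)"
      by (auto simp: ennreal_mult[symmetric] exp_minus_inverse mult.commute)
    finally show ?thesis by (simp add: density_1)
  qed
  have ac1: "absolutely_continuous PP QQ" unfolding Qdens by (rule absolutely_continuousI_density) measurable
  have ac2: "absolutely_continuous QQ PP" unfolding Pdens[symmetric] by (rule absolutely_continuousI_density) measurable
  have RN: "AE \<omega> in QQ. ennreal (exp (S \<omega>)) = RN_deriv QQ PP \<omega>"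
    by (rule RN_deriv_unique_sigma_finite[OF _ Pdens]) (auto intro: prob_space_imp_sigma_finite PPs.prob_space_axioms)
  have RN': "AE \<omega> in PP. ennreal (exp (S \<omega>)) = RN_deriv QQ PP \<omega>"
  proof -
    have "AE \<omega> in density QQ (\<lambda>\<omega>. ennreal (exp (S \<omega>))). ennreal (exp (S \<omega>)) = RN_deriv QQ PP \<omega>"
      using RN by (subst AE_density) (auto elim: AE_mp)
    then show ?thesis by (simp only: Pdens)
  qed
  have ent: "AE \<omega> in PP. entropy_density (exp 1) QQ PP \<omega> = S \<omega>"
    using RN' by eventually_elim (metis (no_types) comp_apply entropy_density_def enn2real_ennreal exp_ge_zero ln_exp log_def div_by_1 ln_exp)
  have entm: "entropy_density (exp 1) QQ PP \<in> borel_measurable PP"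
    using measurable_entropy_density[of "exp 1" QQ PP] by (simp add: measurable_cong_sets[OF sQP refl])
  have intE: "integrable PP (entropy_density (exp 1) QQ PP)"
    using SI integrable_cong_AE[OF entm Sm ent] by simp
  have KLE: "KL_divergence (exp 1) QQ PP = suminf kk"
    unfolding KL_divergence_def using integral_cong_AE[OF entm Sm ent] SE by simp
  have Nfun: "N = (\<lambda>i. density (M i) (\<lambda>y. ennreal (g i y)))" by (simp add: fun_eq_iff N_def)
  show ?thesis using ac1 ac2 intE KLE unfolding PP_def QQ_def Nfun by simp
qed



lemma gauss_sq: "0 < \<sigma> \<Longrightarrow> gauss \<mu> (\<sigma>\<^sup>2) = density lborel (\<lambda>x. ennreal (normal_density \<mu> \<sigma> x))"
  by (simp add: gauss_def)

lemma gauss_poly4: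
  fixes \<mu> \<sigma> c0 c1 c2 c3 c4 :: real assumes s: "0 < \<sigma>"
  shows "has_bochner_integral (gauss \<mu> (\<sigma>\<^sup>2)) (\<lambda>y. c0 + c1*(y-\<mu>) + c2*(y-\<mu>)^2 + c3*(y-\<mu>)^3 + c4*(y-\<mu>)^4)
           (c0 + c2*\<sigma>\<^sup>2 + 3*c4*\<sigma>^4)"
proof -
  let ?nd = "normal_density \<mu> \<sigma>"
  have m0: "has_bochner_integral lborel (\<lambda>y. ?nd y * (y-\<mu>)^(2*0)) 1"
    using normal_moment_even[OF s, where k=0 and \<mu>=\<mu>] by simp
  have m1: "has_bochner_integral lborel (\<lambda>y. ?nd y * (y-\<mu>)^(2*0+1)) 0"
    using normal_moment_odd[OF s, where k=0 and \<mu>=\<mu>] by simp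
  have m2: "has_bochner_integral lborel (\<lambda>y. ?nd y * (y-\<mu>)^(2*1)) (\<sigma>\<^sup>2)"
    using normal_moment_even[OF s, where k=1 and \<mu>=\<mu>] s by simp
  have m3: "has_bochner_integral lborel (\<lambda>y. ?nd y * (y-\<mu>)^(2*1+1)) 0"
    using normal_moment_odd[OF s, where k=1 and \<mu>=\<mu>] by simp
  have m4: "has_bochner_integral lborel (\<lambda>y. ?nd y * (y-\<mu>)^(2*2)) (3*\<sigma>^4)"
  proof -
    have "fact (2 * 2) / ((2 / \<sigma>\<^sup>2) ^ 2 * fact 2) = (3*\<sigma>^4::real)"
      using s by (simp add: fact_numeral power2_eq_square field_simps power4_eq_xxxx)
    then show ?thesis using normal_moment_even[OF s, where k=2 and \<mu>=\<mu>] by simp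
  qed
  have "has_bochner_integral lborel (\<lambda>y. c0 * (?nd y * (y-\<mu>)^(2*0)) + c1 * (?nd y * (y-\<mu>)^(2*0+1)) + c2 * (?nd y * (y-\<mu>)^(2*1))
      + c3 * (?nd y * (y-\<mu>)^(2*1+1)) + c4 * (?nd y * (y-\<mu>)^(2*2))) (c0 * 1 + c1 * 0 + c2 * \<sigma>\<^sup>2 + c3 * 0 + c4 * (3*\<sigma>^4))"
    by (intro has_bochner_integral_add has_bochner_integral_mult_right m0 m1 m2 m3 m4)
  moreover have "(\<lambda>y. c0 * (?nd y * (y-\<mu>)^(2*0)) + c1 * (?nd y * (y-\<mu>)^(2*0+1)) + c2 * (?nd y * (y-\<mu>)^(2*1))
      + c3 * (?nd y * (y-\<mu>)^(2*1+1)) + c4 * (?nd y * (y-\<mu>)^(2*2))) = (\<lambda>y. ?nd y *\<^sub>R (c0 + c1*(y-\<mu>) + c2*(y-\<mu>)^2 + c3*(y-\<mu>)^3 + c4*(y-\<mu>)^4))"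
    by (simp add: fun_eq_iff ring_distribs mult_ac)
  ultimately have "has_bochner_integral lborel (\<lambda>y. ?nd y *\<^sub>R (c0 + c1*(y-\<mu>) + c2*(y-\<mu>)^2 + c3*(y-\<mu>)^3 + c4*(y-\<mu>)^4))
       (c0 + c2*\<sigma>\<^sup>2 + 3*c4*\<sigma>^4)"
    by (simp add: mult_ac)
  then show ?thesis
    unfolding gauss_sq[OF s] by (rule has_bochner_integral_density[rotated 3]) auto
qed



lemma gauss_ratio_ln:
  fixes \<mu> m \<sigma> s y :: real assumes \<sigma>: "0 < \<sigma>" and s: "0 < s"
  shows "ln (normal_density m s y / normal_density \<mu> \<sigma> y) =
     (ln (\<sigma>/s) - (\<mu>-m)^2/(2 * s^2)) + (-(\<mu>-m)/s^2) * (y-\<mu>) + (1/(2*\<sigma>^2) - 1/(2 * s^2)) * (y-\<mu>)^2"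
proof -
  have lnd: "ln (normal_density c t y) = - ln (sqrt (2*pi)) - ln t - (y - c)^2 / (2 * t^2)" if t: "0 < t" for c t
  proof -
    have "sqrt (2 * pi * t^2) = sqrt (2*pi) * t" using t by (simp add: real_sqrt_mult)
    then have "normal_density c t y = (1 / (sqrt (2*pi) * t)) * exp (- ((y - c)^2) / (2 * t^2))"
      by (simp add: normal_density_def)
    then show ?thesis using t by (simp add: ln_mult ln_div)
  qed
  have "ln (normal_density m s y / normal_density \<mu> \<sigma> y) = ln (normal_density m s y) - ln (normal_density \<mu> \<sigma> y)"
    using normal_density_pos[OF \<sigma>, of \<mu> y] normal_density_pos[OF s, of m y] by (simp add: ln_div)
  also have "\<dots> = (ln \<sigma> - ln s) - (y - m)^2 / (2 * s^2) + (y - \<mu>)^2 / (2 * \<sigma>^2)"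
    using lnd[OF s, of m] lnd[OF \<sigma>, of \<mu>] by simp
  also have "\<dots> = (ln (\<sigma>/s) - (\<mu>-m)^2/(2 * s^2)) + (-(\<mu>-m)/s^2) * (y-\<mu>) + (1/(2 * \<sigma>^2) - 1/(2 * s^2)) * (y-\<mu>)^2"
    using \<sigma> s by (simp add: ln_div field_simps power2_eq_square)
  finally show ?thesis .
qed

lemma gauss_KL1:
  fixes \<mu> m \<sigma> s :: real assumes \<sigma>: "0 < \<sigma>" and s: "0 < s"
  defines "g \<equiv> \<lambda>y. normal_density m s y / normal_density \<mu> \<sigma> y"
  shows "density (gauss \<mu> (\<sigma>^2)) (\<lambda>y. ennreal (g y)) = gauss m (s^2)"
    and "integrable (gauss \<mu> (\<sigma>^2)) (\<lambda>y. ln (g y))"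
    and "integrable (gauss \<mu> (\<sigma>^2)) (\<lambda>y. (ln (g y))^2)"
    and "(\<integral>y. - ln (g y) \<partial>gauss \<mu> (\<sigma>^2)) = ln (s/\<sigma>) + (\<sigma>^2 + (\<mu> - m)^2) / (2 * s^2) - 1/2"
    and "(\<integral>y. (- ln (g y) - (ln (s/\<sigma>) + (\<sigma>^2 + (\<mu> - m)^2) / (2 * s^2) - 1/2))^2 \<partial>gauss \<mu> (\<sigma>^2))
          = (\<mu> - m)^2 * \<sigma>^2 / s^4 + 2 * (1/(2 * \<sigma>^2) - 1/(2 * s^2))^2 * \<sigma>^4"
proof -
  define \<alpha> where "\<alpha> = ln (\<sigma>/s) - (\<mu>-m)^2/(2 * s^2)"
  define \<beta> where "\<beta> = -(\<mu>-m)/s^2"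
  define \<gamma> where "\<gamma> = 1/(2 * \<sigma>^2) - 1/(2 * s^2)"
  have lng: "ln (g y) = \<alpha> + \<beta> * (y-\<mu>) + \<gamma> * (y-\<mu>)^2" for y
    unfolding g_def \<alpha>_def \<beta>_def \<gamma>_def by (rule gauss_ratio_ln[OF \<sigma> s])
  have k0: "ln (s/\<sigma>) + (\<sigma>^2 + (\<mu> - m)^2) / (2 * s^2) - 1/2 = - (\<alpha> + \<gamma> * \<sigma>^2)"
    using \<sigma> s by (simp add: \<alpha>_def \<gamma>_def ln_div field_simps)
  have e1: "(\<lambda>y. ln (g y)) = (\<lambda>y. \<alpha> + \<beta>*(y-\<mu>) + \<gamma>*(y-\<mu>)^2 + 0*(y-\<mu>)^3 + 0*(y-\<mu>)^4)"
    by (simp add: lng fun_eq_iff)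
  have h1: "has_bochner_integral (gauss \<mu> (\<sigma>^2)) (\<lambda>y. ln (g y)) (\<alpha> + \<gamma> * \<sigma>^2)"
    unfolding e1 using gauss_poly4[OF \<sigma>, of \<mu> \<alpha> \<beta> \<gamma> 0 0] by simp
  then show "integrable (gauss \<mu> (\<sigma>^2)) (\<lambda>y. ln (g y))" by (rule integrable.intros)
  show "(\<integral>y. - ln (g y) \<partial>gauss \<mu> (\<sigma>^2)) = ln (s/\<sigma>) + (\<sigma>^2 + (\<mu> - m)^2) / (2 * s^2) - 1/2"
    unfolding k0 using has_bochner_integral_integral_eq[OF h1] by simp
  have e2: "(\<lambda>y. (ln (g y))^2) = (\<lambda>y. \<alpha>^2 + (2*\<alpha>*\<beta>)*(y-\<mu>) + (\<beta>^2 + 2*\<alpha>*\<gamma>)*(y-\<mu>)^2 + (2*\<beta>*\<gamma>)*(y-\<mu>)^3 + \<gamma>^2*(y-\<mu>)^4)"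
    unfolding fun_eq_iff lng by (intro allI) algebra
  show "integrable (gauss \<mu> (\<sigma>^2)) (\<lambda>y. (ln (g y))^2)"
    unfolding e2 using gauss_poly4[OF \<sigma>, of \<mu> "\<alpha>^2" "2*\<alpha>*\<beta>" "\<beta>^2 + 2*\<alpha>*\<gamma>" "2*\<beta>*\<gamma>" "\<gamma>^2"]
    by (rule integrable.intros)
  have e3: "(\<lambda>y. (- ln (g y) - (ln (s/\<sigma>) + (\<sigma>^2 + (\<mu> - m)^2) / (2 * s^2) - 1/2))^2) =
     (\<lambda>y. \<gamma>^2*\<sigma>^4 + (-2*\<beta>*\<gamma>*\<sigma>^2)*(y-\<mu>) + (\<beta>^2 - 2*\<gamma>^2*\<sigma>^2)*(y-\<mu>)^2 + (2*\<beta>*\<gamma>)*(y-\<mu>)^3 + \<gamma>^2*(y-\<mu>)^4)"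
    unfolding fun_eq_iff lng k0 by (intro allI) algebra
  have "(\<integral>y. (- ln (g y) - (ln (s/\<sigma>) + (\<sigma>^2 + (\<mu> - m)^2) / (2 * s^2) - 1/2))^2 \<partial>gauss \<mu> (\<sigma>^2))
      = \<gamma>^2*\<sigma>^4 + (\<beta>^2 - 2*\<gamma>^2*\<sigma>^2)*\<sigma>^2 + 3*\<gamma>^2*\<sigma>^4"
    unfolding e3 using gauss_poly4[OF \<sigma>, of \<mu> "\<gamma>^2*\<sigma>^4" "-2*\<beta>*\<gamma>*\<sigma>^2" "\<beta>^2 - 2*\<gamma>^2*\<sigma>^2" "2*\<beta>*\<gamma>" "\<gamma>^2"]
    by (rule has_bochner_integral_integral_eq)
  also have "\<dots> = (\<mu> - m)^2 * \<sigma>^2 / s^4 + 2 * (1/(2 * \<sigma>^2) - 1/(2 * s^2))^2 * \<sigma>^4"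
    unfolding \<beta>_def \<gamma>_def using s by (simp add: field_simps power2_eq_square power4_eq_xxxx)
  finally show "(\<integral>y. (- ln (g y) - (ln (s/\<sigma>) + (\<sigma>^2 + (\<mu> - m)^2) / (2 * s^2) - 1/2))^2 \<partial>gauss \<mu> (\<sigma>^2))
          = (\<mu> - m)^2 * \<sigma>^2 / s^4 + 2 * (1/(2 * \<sigma>^2) - 1/(2 * s^2))^2 * \<sigma>^4" .
  have "density (gauss \<mu> (\<sigma>^2)) (\<lambda>y. ennreal (g y)) = density lborel (\<lambda>y. ennreal (normal_density \<mu> \<sigma> y) * ennreal (g y))"
    unfolding gauss_sq[OF \<sigma>] g_def by (rule density_density_eq) auto
  also have "(\<lambda>y. ennreal (normal_density \<mu> \<sigma> y) * ennreal (g y)) = (\<lambda>y. ennreal (normal_density m s y))"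
  proof
    fix y
    have "normal_density \<mu> \<sigma> y > 0" using normal_density_pos[OF \<sigma>] .
    then show "ennreal (normal_density \<mu> \<sigma> y) * ennreal (g y) = ennreal (normal_density m s y)"
      by (simp add: g_def ennreal_mult[symmetric] less_imp_le)
  qed
  finally show "density (gauss \<mu> (\<sigma>^2)) (\<lambda>y. ennreal (g y)) = gauss m (s^2)"
    by (simp add: gauss_sq[OF s])
qed



lemma kl_bounds:
  fixes \<sigma> s D :: real assumes \<sigma>: "0 < \<sigma>" and le: "\<sigma> \<le> s" and D: "0 \<le> D"
  shows "0 \<le> ln (s/\<sigma>) + (\<sigma>^2 + D) / (2 * s^2) - 1/2"
    and "ln (s/\<sigma>) + (\<sigma>^2 + D) / (2 * s^2) - 1/2 \<le> (s^2 - \<sigma>^2 + D) / (2 * \<sigma>^2)"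
proof -
  have s: "0 < s" using \<sigma> le by linarith
  have l2: "ln ((s/\<sigma>)^2) = 2 * ln (s/\<sigma>)" using \<sigma> s by (simp add: ln_realpow)
  have l3: "ln ((\<sigma>/s)^2) = - 2 * ln (s/\<sigma>)" using \<sigma> s by (simp add: ln_realpow ln_div)
  have a: "ln ((\<sigma>/s)^2) \<le> (\<sigma>/s)^2 - 1" using \<sigma> s by (intro ln_le_minus_one) simp
  have b: "ln ((s/\<sigma>)^2) \<le> (s/\<sigma>)^2 - 1" using \<sigma> s by (intro ln_le_minus_one) simp
  have ss: "\<sigma>^2 \<le> s^2" using \<sigma> le by (intro power_mono) auto
  have "ln (s/\<sigma>) = - ln ((\<sigma>/s)^2) / 2" using l3 by simp
  then have "(1 - (\<sigma>/s)^2) / 2 \<le> ln (s/\<sigma>)" using a by (simp add: field_simps)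
  moreover have "(1 - (\<sigma>/s)^2) / 2 + (\<sigma>^2 + D) / (2 * s^2) - 1/2 = D / (2 * s^2)"
    using s by (simp add: field_simps power2_eq_square)
  moreover have "0 \<le> D / (2 * s^2)" using D by simp
  ultimately show "0 \<le> ln (s/\<sigma>) + (\<sigma>^2 + D) / (2 * s^2) - 1/2" by linarith
  have "ln (s/\<sigma>) = ln ((s/\<sigma>)^2) / 2" using l2 by simp
  then have "ln (s/\<sigma>) \<le> ((s/\<sigma>)^2 - 1) / 2" using b by (simp add: field_simps)
  moreover have "((s/\<sigma>)^2 - 1) / 2 = (s^2 - \<sigma>^2) / (2 * \<sigma>^2)"
    using \<sigma> by (simp add: field_simps power2_eq_square)
  moreover have "\<sigma>^2 / (2 * s^2) \<le> 1/2" using ss s by (simp add: field_simps)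
  moreover have "D / (2 * s^2) \<le> D / (2 * \<sigma>^2)" using ss D \<sigma> s by (intro divide_left_mono) auto
  moreover have "(\<sigma>^2 + D) / (2 * s^2) = \<sigma>^2 / (2 * s^2) + D / (2 * s^2)" by (simp add: add_divide_distrib)
  moreover have "(s^2 - \<sigma>^2 + D) / (2 * \<sigma>^2) = (s^2 - \<sigma>^2) / (2 * \<sigma>^2) + D / (2 * \<sigma>^2)" by (simp add: add_divide_distrib)
  ultimately show "ln (s/\<sigma>) + (\<sigma>^2 + D) / (2 * s^2) - 1/2 \<le> (s^2 - \<sigma>^2 + D) / (2 * \<sigma>^2)" by linarith
qed

lemma vv_bound:
  fixes \<sigma> s D :: real assumes \<sigma>: "0 < \<sigma>" and le: "\<sigma> \<le> s" and D: "0 \<le> D"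
  shows "D * \<sigma>^2 / s^4 + 2 * (1/(2 * \<sigma>^2) - 1/(2 * s^2))^2 * \<sigma>^4 \<le> D / \<sigma>^2 + (s^2 - \<sigma>^2)^2 / (2 * \<sigma>^4)"
proof -
  have s: "0 < s" using \<sigma> le by linarith
  have ss: "\<sigma>^2 \<le> s^2" using \<sigma> le by (intro power_mono) auto
  have s4: "\<sigma>^4 \<le> s^4" using \<sigma> le by (intro power_mono) auto
  have e: "2 * (1/(2 * \<sigma>^2) - 1/(2 * s^2))^2 * \<sigma>^4 = (s^2 - \<sigma>^2)^2 / (2 * s^4)"
    using \<sigma> s by (simp add: field_simps power2_eq_square power4_eq_xxxx)
  have 1: "D * \<sigma>^2 / s^4 \<le> D / \<sigma>^2"
  proof -
    have "\<sigma>^2 * \<sigma>^2 \<le> s^4" using s4 by (simp add: power4_eq_xxxx power2_eq_square mult.assoc)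
    then have "D * \<sigma>^2 * \<sigma>^2 \<le> D * s^4" using D by (simp add: mult_left_mono mult.assoc)
    then show ?thesis using \<sigma> s by (simp add: field_simps)
  qed
  have 2: "(s^2 - \<sigma>^2)^2 / (2 * s^4) \<le> (s^2 - \<sigma>^2)^2 / (2 * \<sigma>^4)"
    using s4 \<sigma> s by (intro divide_left_mono) auto
  show ?thesis using 1 2 e by linarith
qed



lemma coord_nn_integral:
  fixes M :: "nat \<Rightarrow> 'a measure" and f :: "'a \<Rightarrow> ennreal"
  assumes "\<And>i. prob_space (M i)" "f \<in> borel_measurable (M i)"
  shows "(\<integral>\<^sup>+\<omega>. f (\<omega> i) \<partial>PiM UNIV M) = integral\<^sup>N (M i) f"
  using PiM_UNIV_nn_integral_prod[of M "{i}" "\<lambda>_. f"] assms by simp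

lemma sets_gauss[simp]: "sets (gauss c v) = sets borel" by (simp add: gauss_def)
lemma space_gauss[simp]: "space (gauss c v) = UNIV" by (simp add: gauss_def)

lemma measurable_gauss: "measurable (gauss c v) N = measurable borel N"
  by (rule measurable_cong_sets) simp_all

lemma prob_gauss: "0 < v \<Longrightarrow> prob_space (gauss c v)"
  unfolding gauss_def by (rule prob_space_normal_density) simp

theorem lemma3p1:
  fixes \<epsilon> \<epsilon>' :: real and \<theta> \<tau> :: "nat \<Rightarrow> real"
  assumes "\<epsilon> > 0" and "\<epsilon>' > 0"
    and "in_l2 \<theta>" and "in_l2 \<tau>" and "\<And>i. \<tau> i \<ge> 0"
  defines "v1 \<equiv> 1 / (1 / \<epsilon>\<^sup>2 + 1 / \<epsilon>'\<^sup>2)" and "v0 \<equiv> \<epsilon>\<^sup>2"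
  shows "(AE x in gauss_prod \<theta> \<epsilon>.
            absolutely_continuous (bayes_pred \<epsilon> \<epsilon>' \<tau> x) (gauss_prod \<theta> \<epsilon>') \<and>
            absolutely_continuous (gauss_prod \<theta> \<epsilon>') (bayes_pred \<epsilon> \<epsilon>' \<tau> x))
       \<and> summable (\<lambda>i. 1/2 * ln ((1 + (\<tau> i)\<^sup>2 / v1) / (1 + (\<tau> i)\<^sup>2 / v0))
                    + 1/2 * (v1 + (\<theta> i)\<^sup>2) / (v1 + (\<tau> i)\<^sup>2)
                    - 1/2 * (v0 + (\<theta> i)\<^sup>2) / (v0 + (\<tau> i)\<^sup>2))
       \<and> risk (gauss_prod \<theta> \<epsilon>) (gauss_prod \<theta> \<epsilon>') (bayes_pred \<epsilon> \<epsilon>' \<tau>)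
           = ennreal (\<Sum>i. 1/2 * ln ((1 + (\<tau> i)\<^sup>2 / v1) / (1 + (\<tau> i)\<^sup>2 / v0))
                    + 1/2 * (v1 + (\<theta> i)\<^sup>2) / (v1 + (\<tau> i)\<^sup>2)
                    - 1/2 * (v0 + (\<theta> i)\<^sup>2) / (v0 + (\<tau> i)\<^sup>2))"
proof -
  have ep: "0 < \<epsilon>" and ep': "0 < \<epsilon>'" using assms by auto
  have th2: "summable (\<lambda>i. (\<theta> i)^2)" using assms(3) by (simp add: in_l2_def)
  have ta2: "summable (\<lambda>i. (\<tau> i)^2)" using assms(4) by (simp add: in_l2_def)
  define a where "a i = (\<tau> i)^2 / (\<epsilon>^2 + (\<tau> i)^2)" for i
  define u where "u i = \<epsilon>^2 * (\<tau> i)^2 / (\<epsilon>^2 + (\<tau> i)^2)" for i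
  define s where "s i = sqrt (\<epsilon>'^2 + u i)" for i
  define m where "m x i = a i * x i" for x :: "nat \<Rightarrow> real" and i
  have den: "0 < \<epsilon>^2 + (\<tau> i)^2" for i using ep by (simp add: add_pos_nonneg)
  have u0: "0 \<le> u i" for i unfolding u_def using den[of i] by simp
  have uT: "u i \<le> (\<tau> i)^2" for i
  proof -
    have "\<epsilon>^2 * (\<tau> i)^2 \<le> (\<epsilon>^2 + (\<tau> i)^2) * (\<tau> i)^2" by (simp add: mult_right_mono)
    then show ?thesis unfolding u_def using den[of i] by (simp add: divide_le_eq mult.commute)
  qed
  have uE: "u i \<le> \<epsilon>^2" for i
  proof -
    have "\<epsilon>^2 * (\<tau> i)^2 \<le> \<epsilon>^2 * (\<epsilon>^2 + (\<tau> i)^2)" by (simp add: mult_left_mono)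
    then show ?thesis unfolding u_def using den[of i] by (simp add: divide_le_eq mult.commute)
  qed
  have a0: "0 \<le> a i" for i unfolding a_def using den[of i] by simp
  have a1: "a i \<le> 1" for i unfolding a_def using den[of i] ep by simp
  have au: "a i * \<epsilon>^2 = u i" for i unfolding a_def u_def by simp
  have spos: "0 < s i" for i unfolding s_def using ep' u0[of i] by (simp add: add_pos_nonneg)
  have s2: "(s i)^2 = \<epsilon>'^2 + u i" for i unfolding s_def using ep' u0[of i] by (simp add: add_nonneg_nonneg)
  have sge: "\<epsilon>' \<le> s i" for i unfolding s_def using ep' u0[of i] by (simp add: real_le_rsqrt)
  have bp: "bayes_pred \<epsilon> \<epsilon>' \<tau> x = PiM UNIV (\<lambda>i. gauss (m x i) ((s i)^2))" for x
    unfolding bayes_pred_def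
  proof (intro PiM_cong refl)
    fix i
    show "(if \<tau> i = 0 then gauss 0 (\<epsilon>'\<^sup>2)
     else gauss ((1 / \<epsilon>\<^sup>2) / (1 / \<epsilon>\<^sup>2 + 1 / (\<tau> i)\<^sup>2) * x i)
                (1 / (1 / \<epsilon>\<^sup>2 + 1 / (\<tau> i)\<^sup>2) + \<epsilon>'\<^sup>2)) = gauss (m x i) ((s i)^2)"
    proof (cases "\<tau> i = 0")
      case True then show ?thesis by (simp add: m_def a_def s2 u_def)
    next
      case False
      have "(1 / \<epsilon>\<^sup>2) / (1 / \<epsilon>\<^sup>2 + 1 / (\<tau> i)\<^sup>2) = a i"
        using False ep by (simp add: a_def field_simps)
      moreover have "1 / (1 / \<epsilon>\<^sup>2 + 1 / (\<tau> i)\<^sup>2) + \<epsilon>'\<^sup>2 = (s i)^2"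
        using False ep by (simp add: s2 u_def field_simps)
      ultimately show ?thesis using False by (simp add: m_def)
    qed
  qed
  define g where "g x i y = normal_density (m x i) (s i) y / normal_density (\<theta> i) \<epsilon>' y" for x i y
  define kk where "kk x i = ln (s i/\<epsilon>') + (\<epsilon>'^2 + (\<theta> i - m x i)^2) / (2 * (s i)^2) - 1/2" for x i
  define vv where "vv x i = (\<theta> i - m x i)^2 * \<epsilon>'^2 / (s i)^4 + 2 * (1/(2 * \<epsilon>'^2) - 1/(2 * (s i)^2))^2 * \<epsilon>'^4" for x i
  have kpos: "0 \<le> kk x i" for x i unfolding kk_def by (rule kl_bounds(1)[OF ep' sge]) simp
  have kup: "kk x i \<le> (u i + (\<theta> i - m x i)^2) / (2 * \<epsilon>'^2)" for x i
    using kl_bounds(2)[OF ep' sge[of i], of "(\<theta> i - m x i)^2"] by (simp add: kk_def s2)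
  have vpos: "0 \<le> vv x i" for x i unfolding vv_def by (intro add_nonneg_nonneg) auto
  have vup: "vv x i \<le> (\<theta> i - m x i)^2 / \<epsilon>'^2 + \<epsilon>^2 * (\<tau> i)^2 / (2 * \<epsilon>'^4)" for x i
  proof -
    have "vv x i \<le> (\<theta> i - m x i)^2 / \<epsilon>'^2 + ((s i)^2 - \<epsilon>'^2)^2 / (2 * \<epsilon>'^4)"
      unfolding vv_def by (rule vv_bound[OF ep' sge]) simp
    moreover have "((s i)^2 - \<epsilon>'^2)^2 \<le> \<epsilon>^2 * (\<tau> i)^2"
    proof -
      have "(s i)^2 - \<epsilon>'^2 = u i" using s2[of i] by simp
      then show ?thesis using mult_mono[OF uE[of i] uT[of i]] u0[of i] by (simp add: power2_eq_square)
    qed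
    ultimately show ?thesis using ep' by (smt (verit) divide_right_mono zero_le_power)
  qed
  have usum: "summable u"
    by (rule summable_comparison_test'[OF ta2, of 0]) (simp add: u0 uT)
  have gm: "g x i \<in> borel_measurable (gauss c v)" for x i c v
  proof -
    have "g x i \<in> borel_measurable borel" unfolding g_def by measurable
    then show ?thesis by (simp add: measurable_cong_sets[OF sets_gauss refl])
  qed
  have gpos: "0 < g x i y" for x i y
    unfolding g_def using normal_density_pos[OF spos[of i]] normal_density_pos[OF ep'] by (simp add: divide_pos_pos)
  have gdens: "density (gauss (\<theta> i) (\<epsilon>'^2)) (\<lambda>y. ennreal (g x i y)) = gauss (m x i) ((s i)^2)" for x i
    unfolding g_def by (rule gauss_KL1(1)[OF ep' spos])
  have ksum_g: "summable (kk x)" if sx: "summable (\<lambda>i. (\<theta> i - m x i)^2)" for x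
  proof (rule summable_comparison_test'[of "\<lambda>i. (u i + (\<theta> i - m x i)^2) / (2 * \<epsilon>'^2)" 0])
    show "summable (\<lambda>i. (u i + (\<theta> i - m x i)^2) / (2 * \<epsilon>'^2))"
      using usum sx by (intro summable_divide summable_add)
  qed (use kpos kup in simp)
  have good: "KL_loss (gauss_prod \<theta> \<epsilon>') (bayes_pred \<epsilon> \<epsilon>' \<tau> x) = ennreal (\<Sum>i. kk x i) \<and>
       absolutely_continuous (bayes_pred \<epsilon> \<epsilon>' \<tau> x) (gauss_prod \<theta> \<epsilon>') \<and>
       absolutely_continuous (gauss_prod \<theta> \<epsilon>') (bayes_pred \<epsilon> \<epsilon>' \<tau> x)"
    if sx: "summable (\<lambda>i. (\<theta> i - m x i)^2)" for x
  proof -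
    have ksum: "summable (kk x)"
    proof (rule summable_comparison_test'[of "\<lambda>i. (u i + (\<theta> i - m x i)^2) / (2 * \<epsilon>'^2)" 0])
      show "summable (\<lambda>i. (u i + (\<theta> i - m x i)^2) / (2 * \<epsilon>'^2))"
        using usum sx by (intro summable_divide summable_add)
    qed (use kpos kup in simp)
    have vsum: "summable (vv x)"
    proof (rule summable_comparison_test'[of "\<lambda>i. (\<theta> i - m x i)^2 / \<epsilon>'^2 + \<epsilon>^2 * (\<tau> i)^2 / (2 * \<epsilon>'^4)" 0])
      show "summable (\<lambda>i. (\<theta> i - m x i)^2 / \<epsilon>'^2 + \<epsilon>^2 * (\<tau> i)^2 / (2 * \<epsilon>'^4))"
        using ta2 sx by (intro summable_divide summable_add summable_mult)
    qed (use vpos vup in simp)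
    have R: "absolutely_continuous (PiM UNIV (\<lambda>i. gauss (\<theta> i) (\<epsilon>'^2))) (PiM UNIV (\<lambda>i. density (gauss (\<theta> i) (\<epsilon>'^2)) (\<lambda>y. ennreal (g x i y)))) \<and>
     absolutely_continuous (PiM UNIV (\<lambda>i. density (gauss (\<theta> i) (\<epsilon>'^2)) (\<lambda>y. ennreal (g x i y)))) (PiM UNIV (\<lambda>i. gauss (\<theta> i) (\<epsilon>'^2))) \<and>
     integrable (PiM UNIV (\<lambda>i. gauss (\<theta> i) (\<epsilon>'^2))) (entropy_density (exp 1) (PiM UNIV (\<lambda>i. density (gauss (\<theta> i) (\<epsilon>'^2)) (\<lambda>y. ennreal (g x i y)))) (PiM UNIV (\<lambda>i. gauss (\<theta> i) (\<epsilon>'^2)))) \<and>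
     KL_divergence (exp 1) (PiM UNIV (\<lambda>i. density (gauss (\<theta> i) (\<epsilon>'^2)) (\<lambda>y. ennreal (g x i y)))) (PiM UNIV (\<lambda>i. gauss (\<theta> i) (\<epsilon>'^2))) = suminf (kk x)"
    proof (rule product_KL_abstract)
      show "prob_space (gauss (\<theta> i) (\<epsilon>'^2))" for i using ep' by (intro prob_gauss) simp
      show "g x i \<in> borel_measurable (gauss (\<theta> i) (\<epsilon>'^2))" for i by (rule gm)
      show "0 < g x i y" for i y by (rule gpos)
      show "prob_space (density (gauss (\<theta> i) (\<epsilon>'^2)) (\<lambda>y. ennreal (g x i y)))" for i
        unfolding gdens using spos[of i] by (intro prob_gauss) simp
      show "integrable (gauss (\<theta> i) (\<epsilon>'^2)) (\<lambda>y. ln (g x i y))" for i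
        unfolding g_def by (rule gauss_KL1(2)[OF ep' spos])
      show "integrable (gauss (\<theta> i) (\<epsilon>'^2)) (\<lambda>y. (ln (g x i y))^2)" for i
        unfolding g_def by (rule gauss_KL1(3)[OF ep' spos])
      show "kk x i = (\<integral>y. - ln (g x i y) \<partial>gauss (\<theta> i) (\<epsilon>'^2))" for i
        unfolding g_def kk_def m_def by (rule gauss_KL1(4)[OF ep' spos, symmetric])
      show "vv x i = (\<integral>y. (- ln (g x i y) - kk x i)^2 \<partial>gauss (\<theta> i) (\<epsilon>'^2))" for i
        unfolding g_def kk_def vv_def m_def by (rule gauss_KL1(5)[OF ep' spos, symmetric])
    qed (use kpos ksum vsum in auto)
    have e1: "PiM UNIV (\<lambda>i. density (gauss (\<theta> i) (\<epsilon>'^2)) (\<lambda>y. ennreal (g x i y))) = bayes_pred \<epsilon> \<epsilon>' \<tau> x"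
      by (simp add: gdens bp)
    have e2: "PiM UNIV (\<lambda>i. gauss (\<theta> i) (\<epsilon>'^2)) = gauss_prod \<theta> \<epsilon>'" by (simp add: gauss_prod_def)
    show ?thesis using R unfolding e1 e2 KL_loss_def by simp
  qed
  define Pe where "Pe = PiM UNIV (\<lambda>i. gauss (\<theta> i) (\<epsilon>^2))"
  have Pe_eq: "gauss_prod \<theta> \<epsilon> = Pe" by (simp add: gauss_prod_def Pe_def)
  have Pprob: "prob_space (gauss (\<theta> i) (\<epsilon>^2))" for i using ep by (intro prob_gauss) simp
  have compm[measurable]: "(\<lambda>x. x i) \<in> borel_measurable Pe" for i
  proof -
    have "(\<lambda>x. x i) \<in> measurable Pe (gauss (\<theta> i) (\<epsilon>^2))" unfolding Pe_def by (rule measurable_component_singleton) simp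
    then show ?thesis by (simp add: measurable_cong_sets[OF refl sets_gauss])
  qed
  have sq_int: "(\<integral>\<^sup>+y. ennreal (c * (y - \<theta> i)^2) \<partial>gauss (\<theta> i) (\<epsilon>^2)) = ennreal (c * \<epsilon>^2)" if c: "0 \<le> c" for c i
  proof -
    have hb: "has_bochner_integral (gauss (\<theta> i) (\<epsilon>^2)) (\<lambda>y. 0 + 0*(y-\<theta> i) + c*(y-\<theta> i)^2 + 0*(y-\<theta> i)^3 + 0*(y-\<theta> i)^4) (0 + c*\<epsilon>^2 + 3*0*\<epsilon>^4)"
      by (rule gauss_poly4[OF ep])
    then have "has_bochner_integral (gauss (\<theta> i) (\<epsilon>^2)) (\<lambda>y. c*(y-\<theta> i)^2) (c*\<epsilon>^2)" by simp
    note hb2 = this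
    have I: "integrable (gauss (\<theta> i) (\<epsilon>^2)) (\<lambda>y. c*(y-\<theta> i)^2)" using hb2 by (rule integrable.intros)
    have V: "integral\<^sup>L (gauss (\<theta> i) (\<epsilon>^2)) (\<lambda>y. c*(y-\<theta> i)^2) = c*\<epsilon>^2" using hb2 by (rule has_bochner_integral_integral_eq)
    show ?thesis using nn_integral_eq_integral[OF I] c V by simp
  qed
  have asum: "summable (\<lambda>i. (a i)^2 * \<epsilon>^2)"
  proof (rule summable_comparison_test'[OF usum, of 0])
    fix i :: nat
    have "(a i)^2 \<le> a i" using a0[of i] a1[of i] by (simp add: power2_eq_square mult_left_le)
    then have "(a i)^2 * \<epsilon>^2 \<le> a i * \<epsilon>^2" by (simp add: mult_right_mono)
    then show "norm ((a i)^2 * \<epsilon>^2) \<le> u i" by (simp add: au)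
  qed
  have AEa: "AE x in Pe. summable (\<lambda>i. (a i)^2 * (x i - \<theta> i)^2)"
  proof -
    have [measurable]: "(\<lambda>x. ennreal ((a i)^2 * (x i - \<theta> i)^2)) \<in> borel_measurable Pe" for i
      by measurable
    have "(\<integral>\<^sup>+x. (\<Sum>i. ennreal ((a i)^2 * (x i - \<theta> i)^2)) \<partial>Pe) = (\<Sum>i. \<integral>\<^sup>+x. ennreal ((a i)^2 * (x i - \<theta> i)^2) \<partial>Pe)"
      by (rule nn_integral_suminf) measurable
    also have "\<dots> = (\<Sum>i. ennreal ((a i)^2 * \<epsilon>^2))"
    proof (rule suminf_cong)
      fix i
      have "(\<integral>\<^sup>+x. ennreal ((a i)^2 * (x i - \<theta> i)^2) \<partial>Pe) = (\<integral>\<^sup>+y. ennreal ((a i)^2 * (y - \<theta> i)^2) \<partial>gauss (\<theta> i) (\<epsilon>^2))"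
        unfolding Pe_def by (rule coord_nn_integral[OF Pprob]) (unfold measurable_gauss, measurable)
      also have "\<dots> = ennreal ((a i)^2 * \<epsilon>^2)" by (rule sq_int) simp
      finally show "(\<integral>\<^sup>+x. ennreal ((a i)^2 * (x i - \<theta> i)^2) \<partial>Pe) = ennreal ((a i)^2 * \<epsilon>^2)" .
    qed
    also have "\<dots> \<noteq> \<infinity>"
      unfolding infinity_ennreal_def by (rule ennreal_suminf_neq_top[OF asum]) simp
    finally have "AE x in Pe. (\<Sum>i. ennreal ((a i)^2 * (x i - \<theta> i)^2)) \<noteq> \<infinity>"
      by (intro nn_integral_noteq_infinite) measurable
    then show ?thesis by eventually_elim (auto intro: summable_suminf_not_top)
  qed
  have AEgood: "AE x in Pe. summable (\<lambda>i. (\<theta> i - m x i)^2)"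
    using AEa
  proof eventually_elim
    case (elim x)
    show ?case
    proof (rule summable_comparison_test'[of "\<lambda>i. 2 * (\<theta> i)^2 + 2 * ((a i)^2 * (x i - \<theta> i)^2)" 0])
      show "summable (\<lambda>i. 2 * (\<theta> i)^2 + 2 * ((a i)^2 * (x i - \<theta> i)^2))"
        using th2 elim by (intro summable_add summable_mult)
      fix i :: nat
      have e: "\<theta> i - m x i = (1 - a i) * \<theta> i - a i * (x i - \<theta> i)" by (simp add: m_def algebra_simps)
      have p: "((1 - a i) * \<theta> i)^2 \<le> (\<theta> i)^2"
      proof -
        have "(1 - a i)^2 \<le> 1" using a0[of i] a1[of i] by (intro power_le_one) auto
        then have "(1 - a i)^2 * (\<theta> i)^2 \<le> 1 * (\<theta> i)^2" by (intro mult_right_mono) auto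
        then show ?thesis by (simp add: power_mult_distrib)
      qed
      have q: "(a i * (x i - \<theta> i))^2 = (a i)^2 * (x i - \<theta> i)^2" by (simp add: power_mult_distrib)
      have t: "(P - Q)^2 \<le> 2 * P^2 + 2 * Q^2" for P Q :: real
      proof -
        have "0 \<le> (P + Q)^2" by simp
        then show ?thesis by (simp add: power2_eq_square algebra_simps)
      qed
      show "norm ((\<theta> i - m x i)^2) \<le> 2 * (\<theta> i)^2 + 2 * ((a i)^2 * (x i - \<theta> i)^2)"
        using t[of "(1 - a i) * \<theta> i" "a i * (x i - \<theta> i)"] p q unfolding e by simp
    qed
  qed
  define F where "F i = 1/2 * ln ((1 + (\<tau> i)\<^sup>2 / v1) / (1 + (\<tau> i)\<^sup>2 / v0))
                    + 1/2 * (v1 + (\<theta> i)\<^sup>2) / (v1 + (\<tau> i)\<^sup>2)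
                    - 1/2 * (v0 + (\<theta> i)\<^sup>2) / (v0 + (\<tau> i)\<^sup>2)" for i
  define Dx where "Dx i = (1 - a i)^2 * (\<theta> i)^2 + (a i)^2 * \<epsilon>^2" for i
  define Ex where "Ex i = ln (s i/\<epsilon>') + (\<epsilon>'^2 + Dx i) / (2 * (s i)^2) - 1/2" for i
  have Dx0: "0 \<le> Dx i" for i unfolding Dx_def by simp
  have FE: "F i = Ex i" for i
  proof -
    define T where "T = (\<tau> i)^2"
    have T0: "0 \<le> T" unfolding T_def by simp
    have v1e: "v1 = \<epsilon>^2 * \<epsilon>'^2 / (\<epsilon>^2 + \<epsilon>'^2)" unfolding v1_def using ep ep' by (simp add: field_simps)
    have aT: "a i = T / (\<epsilon>^2 + T)" and uT': "u i = \<epsilon>^2 * T / (\<epsilon>^2 + T)" by (simp_all add: a_def u_def T_def)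
    have pos1: "0 < \<epsilon>^2 + T" using ep T0 by (simp add: add_pos_nonneg)
    have pos2: "0 < \<epsilon>^2 + \<epsilon>'^2" using ep ep' by (simp add: add_pos_pos)
    have q1: "1 + T / v0 = (\<epsilon>^2 + T) / \<epsilon>^2" unfolding v0_def using ep by (simp add: field_simps)
    have q2: "1 + T / v1 = (\<epsilon>^2*\<epsilon>'^2 + T*\<epsilon>^2 + T*\<epsilon>'^2) / (\<epsilon>^2*\<epsilon>'^2)"
      unfolding v1e using ep ep' pos2 by (simp add: field_simps)
    have L: "(1 + T / v1) / (1 + T / v0) = (\<epsilon>^2*\<epsilon>'^2 + T*\<epsilon>^2 + T*\<epsilon>'^2) / (\<epsilon>'^2 * (\<epsilon>^2 + T))"
    proof -
      have gen: "(A/(a*b))/(c/a) = A/(b*c)" if "a \<noteq> 0" "b \<noteq> 0" "c \<noteq> 0" for A a b c :: real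
        using that by (simp add: field_simps)
      show ?thesis unfolding q1 q2 using gen[of "\<epsilon>^2" "\<epsilon>'^2" "\<epsilon>^2 + T"] ep ep' pos1 by simp
    qed
    have R: "(s i / \<epsilon>')^2 = (\<epsilon>^2*\<epsilon>'^2 + T*\<epsilon>^2 + T*\<epsilon>'^2) / (\<epsilon>'^2 * (\<epsilon>^2 + T))"
      unfolding power_divide s2 uT' using ep ep' pos1 by (simp add: field_simps)
    have ratio: "(1 + T / v1) / (1 + T / v0) = (s i / \<epsilon>')^2" using L R by simp
    have lnpart: "1/2 * ln ((1 + T / v1) / (1 + T / v0)) = ln (s i/\<epsilon>')"
      unfolding ratio using spos[of i] ep' by (simp add: ln_realpow)
    have ratpart: "1/2 * (v1 + (\<theta> i)\<^sup>2) / (v1 + T) - 1/2 * (v0 + (\<theta> i)\<^sup>2) / (v0 + T)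
        = (\<epsilon>'^2 + Dx i) / (2 * (s i)^2) - 1/2"
    proof -
      define E2 where "E2 = \<epsilon>^2"
      define F2 where "F2 = \<epsilon>'^2"
      define th where "th = (\<theta> i)^2"
      have E0: "0 < E2" and F0: "0 < F2" using ep ep' by (simp_all add: E2_def F2_def)
      define W where "W = E2 * F2 + T * (E2 + F2)"
      have W0: "0 < W" unfolding W_def using E0 F0 T0 by (simp add: add_pos_nonneg)
      have P0: "0 < E2 + T" using E0 T0 by simp
      have e1: "1/2 * (v1 + th) / (v1 + T) = (E2 * F2 + th * (E2 + F2)) / (2 * W)"
      proof -
        have c0: "0 < E2 + F2" using E0 F0 by simp
        have v1e': "v1 = E2 * F2 / (E2 + F2)" unfolding v1e E2_def F2_def ..
        have a1: "v1 + th = (E2 * F2 + th * (E2 + F2)) / (E2 + F2)" unfolding v1e' using c0 by (simp add: field_simps)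
        have a2: "v1 + T = W / (E2 + F2)" unfolding v1e' W_def using c0 by (simp add: field_simps)
        have g2: "(A / c) / (B / c) = A / B" if "c \<noteq> 0" for A B c :: real using that by simp
        have r: "(v1 + th) / (v1 + T) = (E2 * F2 + th * (E2 + F2)) / W"
          unfolding a1 a2 by (rule g2) (use c0 in simp)
        have "1/2 * (v1 + th) / (v1 + T) = ((v1 + th) / (v1 + T)) / 2" by simp
        also have "\<dots> = (E2 * F2 + th * (E2 + F2)) / (2 * W)" unfolding r by simp
        finally show ?thesis .
      qed
      have e2: "1/2 * (v0 + th) / (v0 + T) = (E2 + th) / (2 * (E2 + T))"
        unfolding v0_def E2_def[symmetric] using P0 by (simp add: field_simps)
      have sq: "(s i)^2 = W / (E2 + T)"
        unfolding s2 uT' W_def E2_def[symmetric] F2_def[symmetric] using P0 by (simp add: field_simps)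
      have dx: "Dx i = (E2^2 * th + T^2 * E2) / (E2 + T)^2"
        unfolding Dx_def aT E2_def[symmetric] th_def[symmetric] using P0
        by (simp add: field_simps power2_eq_square, simp add: add_divide_distrib)
      have e3: "(\<epsilon>'^2 + Dx i) / (2 * (s i)^2) - 1/2 = (F2 * (E2 + T)^2 + E2^2 * th + T^2 * E2) / (2 * (E2 + T) * W) - 1/2"
      proof -
        have P2: "(E2 + T)^2 \<noteq> 0" using P0 by simp
        have "\<epsilon>'^2 + (E2^2 * th + T^2 * E2) / (E2 + T)^2 = (F2 * (E2 + T)^2 + E2^2 * th + T^2 * E2) / (E2 + T)^2"
          unfolding F2_def[symmetric] using P2 by (simp add: field_simps)
        then have "(\<epsilon>'^2 + Dx i) / (2 * (s i)^2) = ((F2 * (E2 + T)^2 + E2^2 * th + T^2 * E2) / (E2 + T)^2) / (2 * (W / (E2 + T)))"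
          unfolding sq dx by simp
        also have "\<dots> = (F2 * (E2 + T)^2 + E2^2 * th + T^2 * E2) / (2 * (E2 + T) * W)"
        proof -
          have g3: "(X / c^2) / (2 * (V / c)) = X / (2 * c * V)" if "c \<noteq> 0" "V \<noteq> 0" for X c V :: real
            using that by (simp add: field_simps power2_eq_square)
          show ?thesis by (rule g3) (use P0 W0 in auto)
        qed
        finally show ?thesis by simp
      qed
      have fin: "(E2 * F2 + th * (E2 + F2)) / (2 * W) - (E2 + th) / (2 * (E2 + T))
          = (F2 * (E2 + T)^2 + E2^2 * th + T^2 * E2) / (2 * (E2 + T) * W) - 1/2"
      proof -
        have "(E2 * F2 + th * (E2 + F2)) / (2 * W) - (E2 + th) / (2 * (E2 + T))
            = ((E2 * F2 + th * (E2 + F2)) * (E2 + T) - (E2 + th) * W) / (2 * (E2 + T) * W)"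
        proof -
          have g4: "X / (2 * V) - Y / (2 * c) = (X * c - Y * V) / (2 * c * V)" if "c \<noteq> 0" "V \<noteq> 0" for X Y c V :: real
            using that by (simp add: field_simps)
          show ?thesis by (rule g4) (use P0 W0 in auto)
        qed
        also have "\<dots> = ((F2 * (E2 + T)^2 + E2^2 * th + T^2 * E2) - (E2 + T) * W) / (2 * (E2 + T) * W)"
          unfolding W_def by (rule arg_cong[where f="\<lambda>z. z / _"]) algebra
        also have "\<dots> = (F2 * (E2 + T)^2 + E2^2 * th + T^2 * E2) / (2 * (E2 + T) * W) - 1/2"
        proof -
          have g5: "(Z - c * V) / (2 * c * V) = Z / (2 * c * V) - 1/2" if "c \<noteq> 0" "V \<noteq> 0" for Z c V :: real
            using that by (simp add: field_simps)
          show ?thesis by (rule g5) (use P0 W0 in auto)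
        qed
        finally show ?thesis .
      qed
      show ?thesis using e1 e2 e3 fin by (simp add: th_def)
    qed
    show ?thesis unfolding F_def Ex_def using lnpart ratpart by (simp add: T_def)
  qed
  have Epos: "0 \<le> Ex i" for i unfolding Ex_def by (rule kl_bounds(1)[OF ep' sge Dx0])
  have Eup: "Ex i \<le> (u i + Dx i) / (2 * \<epsilon>'^2)" for i
    using kl_bounds(2)[OF ep' sge[of i] Dx0[of i]] by (simp add: Ex_def s2)
  have Dxup: "Dx i \<le> (\<theta> i)^2 + u i" for i
  proof -
    have "(1 - a i)^2 \<le> 1" using a0[of i] a1[of i] by (intro power_le_one) auto
    then have "(1 - a i)^2 * (\<theta> i)^2 \<le> 1 * (\<theta> i)^2" by (intro mult_right_mono) auto
    moreover have "(a i)^2 \<le> a i" using a0[of i] a1[of i] by (simp add: power2_eq_square mult_left_le)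
    then have "(a i)^2 * \<epsilon>^2 \<le> a i * \<epsilon>^2" by (simp add: mult_right_mono)
    ultimately show ?thesis unfolding Dx_def using au[of i] by simp
  qed
  have Fsum: "summable F"
    unfolding FE[abs_def]
  proof (rule summable_comparison_test'[of "\<lambda>i. (2 * u i + (\<theta> i)^2) / (2 * \<epsilon>'^2)" 0])
    show "summable (\<lambda>i. (2 * u i + (\<theta> i)^2) / (2 * \<epsilon>'^2))"
      using usum th2 by (intro summable_divide summable_add summable_mult)
    fix i :: nat
    have "(u i + Dx i) / (2 * \<epsilon>'^2) \<le> (2 * u i + (\<theta> i)^2) / (2 * \<epsilon>'^2)"
      using Dxup[of i] ep' by (intro divide_right_mono) auto
    then show "norm (Ex i) \<le> (2 * u i + (\<theta> i)^2) / (2 * \<epsilon>'^2)" using Epos[of i] Eup[of i] by simp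
  qed
  have kkm[measurable]: "(\<lambda>x. ennreal (kk x i)) \<in> borel_measurable Pe" for i
    unfolding kk_def m_def by measurable
  have kkE: "(\<integral>\<^sup>+x. ennreal (kk x i) \<partial>Pe) = ennreal (Ex i)" for i
  proof -
    define c0 where "c0 = ln (s i/\<epsilon>') + (\<epsilon>'^2 + ((1 - a i) * \<theta> i)^2) / (2 * (s i)^2) - 1/2"
    define c1 where "c1 = - (2 * ((1 - a i) * \<theta> i) * a i) / (2 * (s i)^2)"
    define c2 where "c2 = (a i)^2 / (2 * (s i)^2)"
    define kk' where "kk' y = ln (s i/\<epsilon>') + (\<epsilon>'^2 + (\<theta> i - a i * y)^2) / (2 * (s i)^2) - 1/2" for y
    have kx: "kk x i = kk' (x i)" for x by (simp add: kk_def kk'_def m_def)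
    have kpoly: "kk' = (\<lambda>y. c0 + c1*(y-\<theta> i) + c2*(y-\<theta> i)^2 + 0*(y-\<theta> i)^3 + 0*(y-\<theta> i)^4)"
    proof
      fix y
      have "\<theta> i - a i * y = (1 - a i) * \<theta> i - a i * (y - \<theta> i)" by (simp add: algebra_simps)
      then show "kk' y = c0 + c1*(y-\<theta> i) + c2*(y-\<theta> i)^2 + 0*(y-\<theta> i)^3 + 0*(y-\<theta> i)^4"
        unfolding kk'_def c0_def c1_def c2_def using spos[of i]
        by (simp add: field_simps power2_eq_square)
    qed
    have hb: "has_bochner_integral (gauss (\<theta> i) (\<epsilon>^2)) kk' (c0 + c2*\<epsilon>^2 + 3*0*\<epsilon>^4)"
      unfolding kpoly by (rule gauss_poly4[OF ep])
    have val: "c0 + c2*\<epsilon>^2 + 3*0*\<epsilon>^4 = Ex i"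
      unfolding c0_def c2_def Ex_def Dx_def using spos[of i] by (simp add: field_simps power2_eq_square)
    have kk'pos: "0 \<le> kk' y" for y using kpos[of "\<lambda>_. y" i] by (simp add: kx)
    have "(\<integral>\<^sup>+x. ennreal (kk x i) \<partial>Pe) = (\<integral>\<^sup>+y. ennreal (kk' y) \<partial>gauss (\<theta> i) (\<epsilon>^2))"
      unfolding kx Pe_def by (rule coord_nn_integral[OF Pprob]) (unfold measurable_gauss kk'_def, measurable)
    also have "\<dots> = ennreal (Ex i)"
      using nn_integral_eq_integral[OF integrable.intros[OF hb]] has_bochner_integral_integral_eq[OF hb] val kk'pos
      by simp
    finally show ?thesis .
  qed
  have risk_eq: "risk (gauss_prod \<theta> \<epsilon>) (gauss_prod \<theta> \<epsilon>') (bayes_pred \<epsilon> \<epsilon>' \<tau>) = ennreal (\<Sum>i. F i)"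
  proof -
    have "risk (gauss_prod \<theta> \<epsilon>) (gauss_prod \<theta> \<epsilon>') (bayes_pred \<epsilon> \<epsilon>' \<tau>) = (\<integral>\<^sup>+x. KL_loss (gauss_prod \<theta> \<epsilon>') (bayes_pred \<epsilon> \<epsilon>' \<tau> x) \<partial>Pe)"
      by (simp add: risk_def Pe_eq)
    also have "\<dots> = (\<integral>\<^sup>+x. (\<Sum>i. ennreal (kk x i)) \<partial>Pe)"
    proof (rule nn_integral_cong_AE)
      show "AE x in Pe. KL_loss (gauss_prod \<theta> \<epsilon>') (bayes_pred \<epsilon> \<epsilon>' \<tau> x) = (\<Sum>i. ennreal (kk x i))"
        using AEgood
      proof eventually_elim
        case (elim x)
        then show ?case using good[OF elim] ksum_g[OF elim] kpos by (simp add: suminf_ennreal2)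
      qed
    qed
    also have "\<dots> = (\<Sum>i. \<integral>\<^sup>+x. ennreal (kk x i) \<partial>Pe)"
      by (rule nn_integral_suminf) measurable
    also have "\<dots> = (\<Sum>i. ennreal (F i))" by (simp add: kkE FE)
    also have "\<dots> = ennreal (\<Sum>i. F i)"
    proof -
      have FEf: "F = Ex" using FE by (simp add: fun_eq_iff)
      have sE: "summable Ex" using Fsum unfolding FEf .
      have "(\<Sum>i. ennreal (Ex i)) = ennreal (\<Sum>i. Ex i)" by (rule suminf_ennreal2[OF Epos sE])
      then show ?thesis unfolding FEf .
    qed
    finally show ?thesis .
  qed
  have AEac: "AE x in gauss_prod \<theta> \<epsilon>.
            absolutely_continuous (bayes_pred \<epsilon> \<epsilon>' \<tau> x) (gauss_prod \<theta> \<epsilon>') \<and>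
            absolutely_continuous (gauss_prod \<theta> \<epsilon>') (bayes_pred \<epsilon> \<epsilon>' \<tau> x)"
    unfolding Pe_eq using AEgood by eventually_elim (use good in blast)
  have Fl: "(\<lambda>i. 1/2 * ln ((1 + (\<tau> i)\<^sup>2 / v1) / (1 + (\<tau> i)\<^sup>2 / v0))
                    + 1/2 * (v1 + (\<theta> i)\<^sup>2) / (v1 + (\<tau> i)\<^sup>2)
                    - 1/2 * (v0 + (\<theta> i)\<^sup>2) / (v0 + (\<tau> i)\<^sup>2)) = F"
    by (rule ext) (simp only: F_def)
  show ?thesis unfolding Fl using AEac Fsum risk_eq by blast
qed


end
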